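(* Let $\omega$ be a general obstacle that does not have a cross, and let $S^*$ be a minimum skeleton for $\omega$. Then $|S^*|\geq 3$.
   Context: An obstacle $\omega$ is a simple polygon in $\mathbb{R}^2$ (a closed, bounded polygonal region without holes whose boundary does not intersect itself), assumed in general position (no three of its vertices are collinear); vertices and edges of $\omega$ are those of its boundary. $\omega$ is rectilinear if each edge is horizontal or vertical, and a rectilinear obstacle is rectilinearly-convex if any two points of $\omega$ can be joined by a shortest rectilinear path (made of horizontal and vertical segments, of minimum $\ell_1$ length) contained in $\omega$. A corner point of a rectilinear path is a point where a horizontal and a vertical segment of the path meet. A set $S$ of closed line segments is inside $\omega$ if the union of its elements is contained in $\omega$. Such an $S$ is a skeleton for $\omega$ if for every pair of points $p,q$ not in the interior of $\omega$ such that every shortest rectilinear path between $p$ and $q$ with at most one corner point meets the interior of $\omega$, each such path intersects some element of $S$; a minimum skeleton is one with the fewest segments and $|S|$ is the number of segments. $B(\omega)$ is the smallest closed axis-parallel rectangle containing $\omega$; the extreme edges are the edges of $\omega$ lying on the boundary of $B(\omega)$ (exactly four: left, right, bottom, top); an extreme corner is a vertex of $\omega$ that is a common endpoint of two extreme edges. A general obstacle is a rectilinearly-convex obstacle with no extreme corners. A cross of $\omega$ is a pair $\{s_H,s_V\}$ of line segments contained in $\omega$, where $s_H$ has one endpoint on each of the two horizontal extreme edges and $s_V$ has one endpoint on each of the two vertical extreme edges. *)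

theory Defs
  imports "HOL-Analysis.Analysis"
begin

type_synonym pt = "real \<times> real"

definition nv :: "pt list \<Rightarrow> nat" where "nv vs = length vs"

definition vtx :: "pt list \<Rightarrow> nat \<Rightarrow> pt" where
  "vtx vs i = vs ! (i mod length vs)"

definition edge :: "pt list \<Rightarrow> nat \<Rightarrow> pt set" where
  "edge vs i = closed_segment (vtx vs i) (vtx vs (Suc i))"

definition poly_boundary :: "pt list \<Rightarrow> pt set" where
  "poly_boundary vs = (\<Union>i<length vs. edge vs i)"

definition simple_polygon :: "pt list \<Rightarrow> bool" where
  "simple_polygon vs \<longleftrightarrow> length vs \<ge> 3 \<and> distinct vs \<and>
     (\<forall>i<length vs. edge vs i \<inter> edge vs (Suc i) = {vtx vs (Suc i)}) \<and>
     (\<forall>i<length vs. \<forall>j<length vs. i \<noteq> j \<and> j \<noteq> Suc i mod length vs \<and> i \<noteq> Suc j mod length vs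
        \<longrightarrow> edge vs i \<inter> edge vs j = {})"

definition general_position :: "pt list \<Rightarrow> bool" where
  "general_position vs \<longleftrightarrow>
     (\<forall>a\<in>set vs. \<forall>b\<in>set vs. \<forall>c\<in>set vs. a \<noteq> b \<and> b \<noteq> c \<and> a \<noteq> c \<longrightarrow> \<not> collinear {a, b, c})"

text \<open>The obstacle: the closed bounded region bounded by the polygon.\<close>
definition region :: "pt list \<Rightarrow> pt set" where
  "region vs = poly_boundary vs \<union> inside (poly_boundary vs)"

definition obstacle :: "pt list \<Rightarrow> bool" where
  "obstacle vs \<longleftrightarrow> simple_polygon vs \<and> general_position vs"

definition rectilinear :: "pt list \<Rightarrow> bool" where
  "rectilinear vs \<longleftrightarrow> (\<forall>i<length vs.
     fst (vtx vs i) = fst (vtx vs (Suc i)) \<or> snd (vtx vs i) = snd (vtx vs (Suc i)))"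

text \<open>A rectilinear path is given by its list of breakpoints; consecutive
  breakpoints are joined by horizontal or vertical segments.\<close>
definition rect_path :: "pt list \<Rightarrow> bool" where
  "rect_path ps \<longleftrightarrow> ps \<noteq> [] \<and> (\<forall>i. Suc i < length ps \<longrightarrow>
     fst (ps ! i) = fst (ps ! Suc i) \<or> snd (ps ! i) = snd (ps ! Suc i))"

definition pseg :: "pt list \<Rightarrow> nat \<Rightarrow> pt set" where
  "pseg ps i = closed_segment (ps ! i) (ps ! Suc i)"

definition path_set :: "pt list \<Rightarrow> pt set" where
  "path_set ps = set ps \<union> (\<Union>i\<in>{i. Suc i < length ps}. pseg ps i)"

definition l1dist :: "pt \<Rightarrow> pt \<Rightarrow> real" where
  "l1dist p q = \<bar>fst q - fst p\<bar> + \<bar>snd q - snd p\<bar>"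

definition rlen :: "pt list \<Rightarrow> real" where
  "rlen ps = (\<Sum>i\<in>{i. Suc i < length ps}. l1dist (ps ! i) (ps ! Suc i))"

definition shortest_rect_path :: "pt list \<Rightarrow> pt \<Rightarrow> pt \<Rightarrow> bool" where
  "shortest_rect_path ps p q \<longleftrightarrow> rect_path ps \<and> hd ps = p \<and> last ps = q \<and>
     rlen ps = l1dist p q"

definition corners :: "pt list \<Rightarrow> pt set" where
  "corners ps = {x. \<exists>i j. Suc i < length ps \<and> Suc j < length ps \<and>
      snd (ps ! i) = snd (ps ! Suc i) \<and> fst (ps ! i) \<noteq> fst (ps ! Suc i) \<and>
      fst (ps ! j) = fst (ps ! Suc j) \<and> snd (ps ! j) \<noteq> snd (ps ! Suc j) \<and>
      x \<in> pseg ps i \<and> x \<in> pseg ps j}"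

definition one_corner_paths :: "pt \<Rightarrow> pt \<Rightarrow> pt set set" where
  "one_corner_paths p q = {path_set ps | ps. shortest_rect_path ps p q \<and>
      (\<forall>x\<in>corners ps. \<forall>y\<in>corners ps. x = y)}"

definition rect_convex :: "pt list \<Rightarrow> bool" where
  "rect_convex vs \<longleftrightarrow> rectilinear vs \<and>
     (\<forall>p\<in>region vs. \<forall>q\<in>region vs. \<exists>ps. shortest_rect_path ps p q \<and> path_set ps \<subseteq> region vs)"

definition is_closed_segment :: "pt set \<Rightarrow> bool" where
  "is_closed_segment s \<longleftrightarrow> (\<exists>a b. a \<noteq> b \<and> s = closed_segment a b)"

definition skeleton :: "pt list \<Rightarrow> pt set set \<Rightarrow> bool" where
  "skeleton vs S \<longleftrightarrow> finite S \<and> (\<forall>s\<in>S. is_closed_segment s) \<and> \<Union>S \<subseteq> region vs \<and>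
     (\<forall>p q. p \<notin> interior (region vs) \<longrightarrow> q \<notin> interior (region vs) \<longrightarrow>
        (\<forall>P\<in>one_corner_paths p q. P \<inter> interior (region vs) \<noteq> {}) \<longrightarrow>
        (\<forall>P\<in>one_corner_paths p q. \<exists>s\<in>S. P \<inter> s \<noteq> {}))"

definition min_skeleton :: "pt list \<Rightarrow> pt set set \<Rightarrow> bool" where
  "min_skeleton vs S \<longleftrightarrow> skeleton vs S \<and> (\<forall>S'. skeleton vs S' \<longrightarrow> card S \<le> card S')"

definition bbox :: "pt set \<Rightarrow> pt set" where
  "bbox W = {x. Inf (fst ` W) \<le> fst x \<and> fst x \<le> Sup (fst ` W) \<and>
                Inf (snd ` W) \<le> snd x \<and> snd x \<le> Sup (snd ` W)}"

definition extreme_edge :: "pt list \<Rightarrow> nat \<Rightarrow> bool" where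
  "extreme_edge vs i \<longleftrightarrow> i < length vs \<and> edge vs i \<subseteq> frontier (bbox (region vs))"

definition horizontal_edge :: "pt list \<Rightarrow> nat \<Rightarrow> bool" where
  "horizontal_edge vs i \<longleftrightarrow> snd (vtx vs i) = snd (vtx vs (Suc i))"

definition vertical_edge :: "pt list \<Rightarrow> nat \<Rightarrow> bool" where
  "vertical_edge vs i \<longleftrightarrow> fst (vtx vs i) = fst (vtx vs (Suc i))"

definition extreme_corner :: "pt list \<Rightarrow> pt \<Rightarrow> bool" where
  "extreme_corner vs v \<longleftrightarrow> v \<in> set vs \<and> (\<exists>i j. i \<noteq> j \<and> extreme_edge vs i \<and> extreme_edge vs j \<and>
      v \<in> {vtx vs i, vtx vs (Suc i)} \<and> v \<in> {vtx vs j, vtx vs (Suc j)})"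

definition general_obstacle :: "pt list \<Rightarrow> bool" where
  "general_obstacle vs \<longleftrightarrow> obstacle vs \<and> rect_convex vs \<and> (\<nexists>v. extreme_corner vs v)"

definition is_cross :: "pt list \<Rightarrow> pt set \<Rightarrow> pt set \<Rightarrow> bool" where
  "is_cross vs sH sV \<longleftrightarrow> sH \<subseteq> region vs \<and> sV \<subseteq> region vs \<and>
     (\<exists>a b i j. sH = closed_segment a b \<and> i \<noteq> j \<and>
        extreme_edge vs i \<and> horizontal_edge vs i \<and> extreme_edge vs j \<and> horizontal_edge vs j \<and>
        a \<in> edge vs i \<and> b \<in> edge vs j) \<and>
     (\<exists>a b i j. sV = closed_segment a b \<and> i \<noteq> j \<and>
        extreme_edge vs i \<and> vertical_edge vs i \<and> extreme_edge vs j \<and> vertical_edge vs j \<and>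
        a \<in> edge vs i \<and> b \<in> edge vs j)"

definition has_cross :: "pt list \<Rightarrow> bool" where
  "has_cross vs \<longleftrightarrow> (\<exists>sH sV. is_cross vs sH sV)"

end

theory Submission
  imports Defs
begin


lemma lin_fst: "linear (fst :: pt \<Rightarrow> real)" by (rule bounded_linear.linear[OF bounded_linear_fst])
lemma lin_snd: "linear (snd :: pt \<Rightarrow> real)" by (rule bounded_linear.linear[OF bounded_linear_snd])

lemma seg_lin:
  fixes f :: "pt \<Rightarrow> real"
  assumes "linear f" "z \<in> closed_segment u v"
  obtains t where "0 \<le> t" "t \<le> 1" "z = (1 - t) *\<^sub>R u + t *\<^sub>R v" "f z = (1 - t) * f u + t * f v"
proof -
  obtain t where t: "0 \<le> t" "t \<le> 1" "z = (1 - t) *\<^sub>R u + t *\<^sub>R v" using assms(2) by (auto simp: in_segment)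
  have "f z = (1 - t) * f u + t * f v" using t(3) linear_add[OF assms(1)] linear_scale[OF assms(1)] by simp
  with t that show ?thesis by blast
qed

lemma seg_between:
  fixes f :: "pt \<Rightarrow> real"
  assumes "linear f" "z \<in> closed_segment u v"
  shows "min (f u) (f v) \<le> f z \<and> f z \<le> max (f u) (f v)"
proof -
  obtain t where t: "0 \<le> t" "t \<le> 1" "f z = (1 - t) * f u + t * f v" using seg_lin[OF assms] by metis
  show ?thesis
  proof (cases "f u \<le> f v")
    case True
    have "(1 - t) * f u + t * f u \<le> (1 - t) * f u + t * f v" using t True by (simp add: mult_left_mono)
    moreover have "(1 - t) * f u + t * f v \<le> (1 - t) * f v + t * f v" using t True by (simp add: mult_left_mono)
    ultimately show ?thesis using t True by (simp add: algebra_simps)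
  next
    case False
    have "(1 - t) * f u + t * f v \<le> (1 - t) * f u + t * f u" using t False by (simp add: mult_left_mono)
    moreover have "(1 - t) * f v + t * f v \<le> (1 - t) * f u + t * f v" using t False by (simp add: mult_left_mono)
    ultimately show ?thesis using t False by (simp add: algebra_simps)
  qed
qed

lemma seg_const:
  fixes f :: "pt \<Rightarrow> real"
  assumes "linear f" "z \<in> closed_segment u v" "f u = c" "f v = c"
  shows "f z = c"
  using seg_between[OF assms(1,2)] assms(3,4) by auto

lemma seg_extreme:
  fixes f :: "pt \<Rightarrow> real"
  assumes "linear f" "z \<in> closed_segment u v" "f u \<le> M" "f v \<le> M" "f z = M"
  shows "z = u \<or> z = v \<or> (f u = M \<and> f v = M)"
proof -
  obtain t where t: "0 \<le> t" "t \<le> 1" "z = (1 - t) *\<^sub>R u + t *\<^sub>R v" "f z = (1 - t) * f u + t * f v"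
    using seg_lin[OF assms(1,2)] by metis
  consider "t = 0" | "t = 1" | "0 < t \<and> t < 1" using t by linarith
  then show ?thesis
  proof cases
    case 3
    have "f u = M"
    proof (rule ccontr)
      assume "f u \<noteq> M" then have "f u < M" using assms by simp
      then have "(1 - t) * f u < (1 - t) * M" using 3 by simp
      moreover have "t * f v \<le> t * M" using 3 assms(4) by (simp add: mult_left_mono)
      ultimately show False using t(4) assms(5) by (simp add: algebra_simps)
    qed
    moreover have "f v = M"
    proof (rule ccontr)
      assume "f v \<noteq> M" then have "f v < M" using assms by simp
      then have "t * f v < t * M" using 3 by simp
      moreover have "(1 - t) * f u \<le> (1 - t) * M" using 3 assms(3) by (simp add: mult_left_mono)
      ultimately show False using t(4) assms(5) by (simp add: algebra_simps)
    qed
    ultimately show ?thesis by simp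
  qed (use t in auto)
qed

lemma seg_extreme_min:
  fixes f :: "pt \<Rightarrow> real"
  assumes "linear f" "z \<in> closed_segment u v" "M \<le> f u" "M \<le> f v" "f z = M"
  shows "z = u \<or> z = v \<or> (f u = M \<and> f v = M)"
proof -
  have l: "linear (\<lambda>x. - f x)" using assms(1) by (simp add: linear_compose_neg)
  show ?thesis using seg_extreme[OF l assms(2), of "-M"] assms by auto
qed

lemma vert_in_seg:
  fixes w1 w2 z :: pt
  assumes "fst w1 = fst z" "fst w2 = fst z" "snd w2 \<le> snd z" "snd z \<le> snd w1"
  shows "z \<in> closed_segment w2 w1"
proof (cases "snd w1 = snd w2")
  case True
  then have "z = w1" using assms by (simp add: prod_eq_iff)
  then show ?thesis by simp
next
  case False
  define l where "l = (snd z - snd w2) / (snd w1 - snd w2)"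
  have d: "snd w1 - snd w2 > 0" using assms False by simp
  have "0 \<le> l" "l \<le> 1" using assms d by (auto simp: l_def divide_simps)
  moreover have "z = (1 - l) *\<^sub>R w2 + l *\<^sub>R w1"
  proof -
    have e: "l * (snd w1 - snd w2) = snd z - snd w2" using d by (simp add: l_def)
    have "fst ((1 - l) *\<^sub>R w2 + l *\<^sub>R w1) = fst z" using assms by (simp add: algebra_simps)
    moreover have "snd ((1 - l) *\<^sub>R w2 + l *\<^sub>R w1) = snd w2 + l * (snd w1 - snd w2)"
      by (simp add: algebra_simps)
    ultimately show ?thesis using e by (simp add: prod_eq_iff)
  qed
  ultimately show ?thesis by (auto simp: in_segment)
qed


lemma ratio01:
  fixes a b e :: real
  assumes "(a \<le> b \<and> b \<le> e) \<or> (e \<le> b \<and> b \<le> a)"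
  shows "0 \<le> (b - a) / (e - a) \<and> (b - a) / (e - a) \<le> 1 \<and> (b - a) / (e - a) * (e - a) = b - a"
proof (cases "e = a")
  case True then show ?thesis using assms by auto
next
  case False
  show ?thesis
  proof (cases "a \<le> b \<and> b \<le> e")
    case True
    then have "e - a > 0" using False by auto
    then show ?thesis using True by (auto simp: divide_simps)
  next
    case F2: False
    then have "e \<le> b \<and> b \<le> a" using assms by auto
    then have "a - e > 0" using False by auto
    then show ?thesis using \<open>e \<le> b \<and> b \<le> a\<close> by (auto simp: divide_simps)
  qed
qed

lemma sandwich:
  fixes K :: "pt set"
  assumes vconv: "\<forall>p\<in>K. \<forall>q\<in>K. fst p = fst q \<longrightarrow> closed_segment p q \<subseteq> K"
    and PT: "PT = (a, Y1)" and PB: "PB = (b, Y0)" and P1: "P1 = (e1, l1)" and P2: "P2 = (e2, l2)"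
    and l: "Y0 \<le> l1" "l1 \<le> Y1" "Y0 \<le> l2" "l2 \<le> Y1"
    and h1: "(a \<le> b \<and> b \<le> e1) \<or> (e1 \<le> b \<and> b \<le> a)"
    and h2: "(b \<le> a \<and> a \<le> e2) \<or> (e2 \<le> a \<and> a \<le> b)"
    and s1: "closed_segment PT P1 \<subseteq> K" and s2: "closed_segment PB P2 \<subseteq> K"
  shows "closed_segment PT PB \<subseteq> K"
proof
  fix z assume "z \<in> closed_segment PT PB"
  then obtain t where t: "0 \<le> t" "t \<le> 1" "z = (1 - t) *\<^sub>R PT + t *\<^sub>R PB" by (auto simp: in_segment)
  have fz: "fst z = a + t * (b - a)" and sz: "snd z = Y1 + t * (Y0 - Y1)"
    using t(3) PT PB by (simp_all add: algebra_simps)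
  define r1 where "r1 = (b - a) / (e1 - a)"
  define r2 where "r2 = (a - b) / (e2 - b)"
  have r1: "0 \<le> r1" "r1 \<le> 1" "r1 * (e1 - a) = b - a" using ratio01[OF h1] by (simp_all add: r1_def)
  have r2: "0 \<le> r2" "r2 \<le> 1" "r2 * (e2 - b) = a - b" using ratio01[of b a e2] h2 by (auto simp: r2_def)
  define m where "m = t * r1"
  define n where "n = (1 - t) * r2"
  have m01: "0 \<le> m" "m \<le> 1" using t r1 by (auto simp: m_def mult_le_one)
  have n01: "0 \<le> n" "n \<le> 1" using t r2 by (auto simp: n_def mult_le_one)
  define w1 where "w1 = (1 - m) *\<^sub>R PT + m *\<^sub>R P1"
  define w2 where "w2 = (1 - n) *\<^sub>R PB + n *\<^sub>R P2"
  have w1K: "w1 \<in> K"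
  proof -
    have "w1 \<in> closed_segment PT P1" using m01 unfolding w1_def in_segment by blast
    then show ?thesis using s1 by blast
  qed
  have w2K: "w2 \<in> K"
  proof -
    have "w2 \<in> closed_segment PB P2" using n01 unfolding w2_def in_segment by blast
    then show ?thesis using s2 by blast
  qed
  have fw1: "fst w1 = fst z"
  proof -
    have "fst w1 = a + t * (r1 * (e1 - a))" using PT P1 by (simp add: w1_def m_def algebra_simps)
    then show ?thesis using r1(3) fz by simp
  qed
  have fw2: "fst w2 = fst z"
  proof -
    have "fst w2 = b + (1 - t) * (r2 * (e2 - b))" using PB P2 by (simp add: w2_def n_def algebra_simps)
    then have "fst w2 = b + (1 - t) * (a - b)" using r2(3) by simp
    then show ?thesis using fz by (simp add: algebra_simps)
  qed
  have sw1: "snd z \<le> snd w1"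
  proof -
    have e: "snd w1 = Y1 - m * (Y1 - l1)" using PT P1 by (simp add: w1_def algebra_simps)
    have "r1 * (Y1 - l1) \<le> 1 * (Y1 - Y0)" using r1 l by (intro mult_mono) auto
    then have "t * (r1 * (Y1 - l1)) \<le> t * (Y1 - Y0)" using t by (simp add: mult_left_mono)
    then show ?thesis using e sz by (simp add: m_def algebra_simps)
  qed
  have sw2: "snd w2 \<le> snd z"
  proof -
    have e: "snd w2 = Y0 + n * (l2 - Y0)" using PB P2 by (simp add: w2_def algebra_simps)
    have "r2 * (l2 - Y0) \<le> 1 * (Y1 - Y0)" using r2 l by (intro mult_mono) auto
    then have "(1 - t) * (r2 * (l2 - Y0)) \<le> (1 - t) * (Y1 - Y0)" using t by (simp add: mult_left_mono)
    then show ?thesis using e sz by (simp add: n_def algebra_simps)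
  qed
  have "z \<in> closed_segment w2 w1" by (rule vert_in_seg) (use fw1 fw2 sw1 sw2 in auto)
  moreover have "closed_segment w2 w1 \<subseteq> K" using vconv w1K w2K fw1 fw2 by auto
  ultimately show "z \<in> K" by blast
qed


lemma end_max:
  fixes f :: "pt \<Rightarrow> real"
  assumes "linear f" "closed_segment u v \<subseteq> K" "\<forall>z\<in>K. f z \<le> M"
    "P \<in> closed_segment u v" "f P = M" "Q \<in> closed_segment u v" "f Q \<noteq> M"
  shows "P = u \<or> P = v"
proof -
  have "u \<in> K" "v \<in> K" using assms(2) by auto
  then have "f u \<le> M" "f v \<le> M" using assms(3) by auto
  from seg_extreme[OF assms(1,4) this assms(5)]
  have "P = u \<or> P = v \<or> (f u = M \<and> f v = M)" .
  moreover have "\<not> (f u = M \<and> f v = M)" using seg_const[OF assms(1,6)] assms(7) by blast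
  ultimately show ?thesis by blast
qed

lemma end_min:
  fixes f :: "pt \<Rightarrow> real"
  assumes "linear f" "closed_segment u v \<subseteq> K" "\<forall>z\<in>K. M \<le> f z"
    "P \<in> closed_segment u v" "f P = M" "Q \<in> closed_segment u v" "f Q \<noteq> M"
  shows "P = u \<or> P = v"
proof -
  have "u \<in> K" "v \<in> K" using assms(2) by auto
  then have "M \<le> f u" "M \<le> f v" using assms(3) by auto
  from seg_extreme_min[OF assms(1,4) this assms(5)]
  have "P = u \<or> P = v \<or> (f u = M \<and> f v = M)" .
  moreover have "\<not> (f u = M \<and> f v = M)" using seg_const[OF assms(1,6)] assms(7) by blast
  ultimately show ?thesis by blast
qed

lemma seg_eq_ends:
  assumes "P = u \<or> P = v" "Q = u \<or> Q = v" "P \<noteq> Q"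
  shows "closed_segment u v = closed_segment P Q"
  using assms closed_segment_commute by blast

lemma core_sH:
  fixes K :: "pt set"
  assumes box: "\<forall>z\<in>K. X0 \<le> fst z \<and> fst z \<le> X1 \<and> Y0 \<le> snd z \<and> snd z \<le> Y1"
    and vconv: "\<forall>p\<in>K. \<forall>q\<in>K. fst p = fst q \<longrightarrow> closed_segment p q \<subseteq> K"
    and nocorner: "\<forall>z\<in>K. (fst z = X0 \<or> fst z = X1) \<longrightarrow> snd z \<noteq> Y0 \<and> snd z \<noteq> Y1"
    and seg1: "closed_segment u1 v1 \<subseteq> K" and seg2: "closed_segment u2 v2 \<subseteq> K"
    and covx: "\<forall>x. X0 \<le> x \<and> x \<le> X1 \<longrightarrow> (\<exists>z\<in>closed_segment u1 v1 \<union> closed_segment u2 v2. fst z = x)"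
    and PT: "PT \<in> closed_segment u1 v1" "snd PT = Y1"
    and PB: "PB \<in> closed_segment u2 v2" "snd PB = Y0"
    and PL: "PL \<in> closed_segment u1 v1 \<union> closed_segment u2 v2" "fst PL = X0"
    and PR: "PR \<in> closed_segment u1 v1 \<union> closed_segment u2 v2" "fst PR = X1"
  shows "closed_segment PT PB \<subseteq> K"
proof -
  let ?A1 = "closed_segment u1 v1" and ?A2 = "closed_segment u2 v2"
  have K: "PT \<in> K" "PB \<in> K" "PL \<in> K" "PR \<in> K" using PT PB PL PR seg1 seg2 by blast+
  have bxT: "\<forall>z\<in>K. snd z \<le> Y1" and bxB: "\<forall>z\<in>K. Y0 \<le> snd z"
    and bxL: "\<forall>z\<in>K. X0 \<le> fst z" and bxR: "\<forall>z\<in>K. fst z \<le> X1" using box by auto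
  have nT: "fst PT \<noteq> X0" "fst PT \<noteq> X1" using nocorner K PT by auto
  have nB: "fst PB \<noteq> X0" "fst PB \<noteq> X1" using nocorner K PB by auto
  have nL: "snd PL \<noteq> Y0" "snd PL \<noteq> Y1" using nocorner K PL by auto
  have nR: "snd PR \<noteq> Y0" "snd PR \<noteq> Y1" using nocorner K PR by auto
  have X01: "X0 < X1" using box K nT by force
  have Y01: "Y0 < Y1" using box K nL by force
  have LR: "PL \<noteq> PR" using PL PR X01 by auto
  have TL: "PT \<noteq> PL" "PT \<noteq> PR" using nT PL PR by auto
  have BL: "PB \<noteq> PL" "PB \<noteq> PR" using nB PL PR by auto
  note lf = lin_fst and ls = lin_snd
  have xa: "X0 \<le> fst PT" "fst PT \<le> X1" "X0 \<le> fst PB" "fst PB \<le> X1" using box K by auto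
  have ly: "Y0 \<le> snd PL" "snd PL \<le> Y1" "Y0 \<le> snd PR" "snd PR \<le> Y1" using box K by auto
  have eT: "PT = (fst PT, Y1)" "PB = (fst PB, Y0)" "PL = (X0, snd PL)" "PR = (X1, snd PR)"
    using PT PB PL PR by (simp_all add: prod_eq_iff)
  consider "PL \<in> ?A1 \<and> PR \<in> ?A1" | "PL \<in> ?A2 \<and> PR \<in> ?A2" | "PL \<in> ?A1 \<and> PR \<in> ?A2" | "PL \<in> ?A2 \<and> PR \<in> ?A1"
    using PL PR by blast
  then show ?thesis
  proof cases
    case 1
    have "PT = u1 \<or> PT = v1" using end_max[OF ls seg1 bxT PT(1) PT(2), of PL] 1 nL by blast
    moreover have "PL = u1 \<or> PL = v1" using end_min[OF lf seg1 bxL _ PL(2), of PT] 1 PT nT by blast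
    moreover have "PR = u1 \<or> PR = v1" using end_max[OF lf seg1 bxR _ PR(2), of PT] 1 PT nT by blast
    ultimately show ?thesis using TL LR by blast
  next
    case 2
    have "PB = u2 \<or> PB = v2" using end_min[OF ls seg2 bxB PB(1) PB(2), of PL] 2 nL by blast
    moreover have "PL = u2 \<or> PL = v2" using end_min[OF lf seg2 bxL _ PL(2), of PB] 2 PB nB by blast
    moreover have "PR = u2 \<or> PR = v2" using end_max[OF lf seg2 bxR _ PR(2), of PB] 2 PB nB by blast
    ultimately show ?thesis using BL LR by blast
  next
    case 3
    have "PT = u1 \<or> PT = v1" using end_max[OF ls seg1 bxT PT(1) PT(2), of PL] 3 nL by blast
    moreover have "PL = u1 \<or> PL = v1" using end_min[OF lf seg1 bxL _ PL(2), of PT] 3 PT nT by blast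
    ultimately have A1: "?A1 = closed_segment PT PL" using TL by (intro seg_eq_ends) auto
    have "PB = u2 \<or> PB = v2" using end_min[OF ls seg2 bxB PB(1) PB(2), of PR] 3 nR by blast
    moreover have "PR = u2 \<or> PR = v2" using end_max[OF lf seg2 bxR _ PR(2), of PB] 3 PB nB by blast
    ultimately have A2: "?A2 = closed_segment PB PR" using BL by (intro seg_eq_ends) auto
    have ba: "fst PB \<le> fst PT"
    proof (rule ccontr)
      assume nba: "\<not> fst PB \<le> fst PT"
      define x where "x = (fst PB + fst PT) / 2"
      have "X0 \<le> x \<and> x \<le> X1" using xa by (simp add: x_def)
      then obtain z where z: "z \<in> ?A1 \<union> ?A2" "fst z = x" using covx by blast
      show False
      proof (cases "z \<in> ?A1")
        case True
        then have "fst z \<le> max (fst PT) (fst PL)" using seg_between[OF lf] A1 by blast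
        then show False using z nba PL xa by (auto simp: x_def)
      next
        case False
        then have "z \<in> ?A2" using z by blast
        then have "min (fst PB) (fst PR) \<le> fst z" using seg_between[OF lf] A2 by blast
        then show False using z nba PR xa by (auto simp: x_def)
      qed
    qed
    show ?thesis
      by (rule sandwich[OF vconv eT(1) eT(2) eT(3) eT(4) ly])
         (use ba xa seg1[unfolded A1] seg2[unfolded A2] in \<open>simp_all\<close>)
  next
    case 4
    have "PT = u1 \<or> PT = v1" using end_max[OF ls seg1 bxT PT(1) PT(2), of PR] 4 nR by blast
    moreover have "PR = u1 \<or> PR = v1" using end_max[OF lf seg1 bxR _ PR(2), of PT] 4 PT nT by blast
    ultimately have A1: "?A1 = closed_segment PT PR" using TL by (intro seg_eq_ends) auto
    have "PB = u2 \<or> PB = v2" using end_min[OF ls seg2 bxB PB(1) PB(2), of PL] 4 nL by blast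
    moreover have "PL = u2 \<or> PL = v2" using end_min[OF lf seg2 bxL _ PL(2), of PB] 4 PB nB by blast
    ultimately have A2: "?A2 = closed_segment PB PL" using BL by (intro seg_eq_ends) auto
    have ab: "fst PT \<le> fst PB"
    proof (rule ccontr)
      assume nba: "\<not> fst PT \<le> fst PB"
      define x where "x = (fst PB + fst PT) / 2"
      have "X0 \<le> x \<and> x \<le> X1" using xa by (simp add: x_def)
      then obtain z where z: "z \<in> ?A1 \<union> ?A2" "fst z = x" using covx by blast
      show False
      proof (cases "z \<in> ?A1")
        case True
        then have "min (fst PT) (fst PR) \<le> fst z" using seg_between[OF lf] A1 by blast
        then show False using z nba PR xa by (auto simp: x_def)
      next
        case False
        then have "z \<in> ?A2" using z by blast
        then have "fst z \<le> max (fst PB) (fst PL)" using seg_between[OF lf] A2 by blast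
        then show False using z nba PL xa by (auto simp: x_def)
      qed
    qed
    show ?thesis
      by (rule sandwich[OF vconv eT(1) eT(2) eT(4) eT(3) ly(3,4,1,2)])
         (use ab xa seg1[unfolded A1] seg2[unfolded A2] in \<open>simp_all\<close>)
  qed
qed

lemma abstract_sH:
  fixes K :: "pt set"
  assumes box: "\<forall>z\<in>K. X0 \<le> fst z \<and> fst z \<le> X1 \<and> Y0 \<le> snd z \<and> snd z \<le> Y1"
    and vconv: "\<forall>p\<in>K. \<forall>q\<in>K. fst p = fst q \<longrightarrow> closed_segment p q \<subseteq> K"
    and nocorner: "\<forall>z\<in>K. (fst z = X0 \<or> fst z = X1) \<longrightarrow> snd z \<noteq> Y0 \<and> snd z \<noteq> Y1"
    and seg1: "closed_segment u1 v1 \<subseteq> K" and seg2: "closed_segment u2 v2 \<subseteq> K"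
    and covx: "\<forall>x. X0 \<le> x \<and> x \<le> X1 \<longrightarrow> (\<exists>z\<in>closed_segment u1 v1 \<union> closed_segment u2 v2. fst z = x)"
    and covy: "\<forall>y. Y0 \<le> y \<and> y \<le> Y1 \<longrightarrow> (\<exists>z\<in>closed_segment u1 v1 \<union> closed_segment u2 v2. snd z = y)"
    and Y01: "Y0 \<le> Y1" and X01: "X0 \<le> X1"
  shows "\<exists>P Q. P \<in> K \<and> Q \<in> K \<and> snd P = Y1 \<and> snd Q = Y0 \<and> closed_segment P Q \<subseteq> K"
proof -
  let ?A1 = "closed_segment u1 v1" and ?A2 = "closed_segment u2 v2"
  obtain PT where PT: "PT \<in> ?A1 \<union> ?A2" "snd PT = Y1" using covy Y01 by blast
  obtain PB where PB: "PB \<in> ?A1 \<union> ?A2" "snd PB = Y0" using covy Y01 by blast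
  obtain PL where PL: "PL \<in> ?A1 \<union> ?A2" "fst PL = X0" using covx X01 by blast
  obtain PR where PR: "PR \<in> ?A1 \<union> ?A2" "fst PR = X1" using covx X01 by blast
  have K: "PT \<in> K" "PB \<in> K" using PT PB seg1 seg2 by blast+
  have "closed_segment PT PB \<subseteq> K"
  proof (cases "(PT \<in> ?A1 \<and> PB \<in> ?A1) \<or> (PT \<in> ?A2 \<and> PB \<in> ?A2)")
    case True
    then show ?thesis using seg1 seg2
      by (meson closed_segment_subset convex_closed_segment subset_trans)
  next
    case False
    then consider "PT \<in> ?A1 \<and> PB \<in> ?A2" | "PT \<in> ?A2 \<and> PB \<in> ?A1" using PT PB by blast
    then show ?thesis
    proof cases
      case 1
      show ?thesis
        by (rule core_sH[OF box vconv nocorner seg1 seg2 covx, of PT PB PL PR]) (use 1 PT PB PL PR in auto)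
    next
      case 2
      have covx': "\<forall>x. X0 \<le> x \<and> x \<le> X1 \<longrightarrow> (\<exists>z\<in>?A2 \<union> ?A1. fst z = x)" using covx by blast
      show ?thesis
        by (rule core_sH[OF box vconv nocorner seg2 seg1 covx', of PT PB PL PR]) (use 2 PT PB PL PR in auto)
    qed
  qed
  then show ?thesis using K PT PB by blast
qed


lemma idx_Cons2: "{i. Suc i < length (a # b # rest)} = insert 0 (Suc ` {i. Suc i < length (b # rest)})"
  by (auto simp: image_iff) (metis Suc_less_eq less_Suc_eq_0_disj nat.exhaust)

lemma path_set_single: "path_set [a] = {a}"
  by (simp add: path_set_def)

lemma path_set_Cons2: "path_set (a # b # rest) = closed_segment a b \<union> path_set (b # rest)"
proof -
  have "(\<Union>i\<in>{i. Suc i < length (a # b # rest)}. pseg (a # b # rest) i) =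
        closed_segment a b \<union> (\<Union>i\<in>{i. Suc i < length (b # rest)}. pseg (b # rest) i)"
    unfolding idx_Cons2 by (auto simp: pseg_def)
  then show ?thesis unfolding path_set_def by auto
qed

lemma rlen_single: "rlen [a] = 0" by (simp add: rlen_def)

lemma rlen_Cons2: "rlen (a # b # rest) = l1dist a b + rlen (b # rest)"
proof -
  have fin: "finite {i. Suc i < length (b # rest)}" by simp
  have "0 \<notin> Suc ` {i. Suc i < length (b # rest)}" by auto
  then show ?thesis unfolding rlen_def idx_Cons2
    by (simp add: sum.insert[OF finite_imageI[OF fin]] sum.reindex)
qed

lemma path_bound:
  fixes f g :: "pt \<Rightarrow> real"
  assumes l1: "\<And>a b. l1dist a b = \<bar>f b - f a\<bar> + \<bar>g b - g a\<bar>"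
    and "ps \<noteq> []" "z \<in> path_set ps" and lf: "linear f"
  shows "\<bar>g (last ps) - g (hd ps)\<bar> + \<bar>f z - f (hd ps)\<bar> \<le> rlen ps"
  using assms(2,3)
proof (induction ps arbitrary: z rule: induct_list012)
  case 1 then show ?case by simp
next
  case (2 x) then show ?case by (simp add: path_set_single rlen_single)
next
  case (3 x y zs)
  show ?case
  proof (cases "z \<in> closed_segment x y")
    case True
    have IH0: "\<bar>g (last (y # zs)) - g y\<bar> + \<bar>f y - f y\<bar> \<le> rlen (y # zs)"
      using "3.IH"(2)[of y] by (simp add: path_set_def)
    have "\<bar>f z - f x\<bar> \<le> \<bar>f y - f x\<bar>" using seg_between[OF lf True] by auto
    then show ?thesis using IH0 by (simp add: rlen_Cons2 l1)
  next
    case False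
    then have "z \<in> path_set (y # zs)" using "3.prems" by (simp add: path_set_Cons2)
    then have IH: "\<bar>g (last (y # zs)) - g y\<bar> + \<bar>f z - f y\<bar> \<le> rlen (y # zs)" using "3.IH"(2) by simp
    then show ?thesis by (simp add: rlen_Cons2 l1)
  qed
qed

lemma path_connected_set:
  assumes "ps \<noteq> []"
  shows "connected (path_set ps) \<and> hd ps \<in> path_set ps \<and> last ps \<in> path_set ps"
  using assms
proof (induction ps rule: induct_list012)
  case (3 x y zs)
  have "connected (closed_segment x y \<union> path_set (y # zs))"
    using "3.IH"(2) by (intro connected_Un) auto
  then show ?case using "3.IH"(2) by (auto simp: path_set_Cons2)
qed (auto simp: path_set_single)

lemma shortest_seg:
  fixes f g :: "pt \<Rightarrow> real"
  assumes l1: "\<And>a b. l1dist a b = \<bar>f b - f a\<bar> + \<bar>g b - g a\<bar>"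
    and lf: "linear f" and lg: "linear g"
    and inj: "\<And>z w. f z = f w \<Longrightarrow> g z = g w \<Longrightarrow> z = w"
    and sp: "shortest_rect_path ps p q" and fpq: "f p = f q"
  shows "closed_segment p q \<subseteq> path_set ps" "\<forall>z\<in>path_set ps. f z = f p"
proof -
  have ne: "ps \<noteq> []" and hd: "hd ps = p" and la: "last ps = q" and rl: "rlen ps = l1dist p q"
    using sp by (auto simp: shortest_rect_path_def rect_path_def)
  show fz: "\<forall>z\<in>path_set ps. f z = f p"
  proof
    fix z assume "z \<in> path_set ps"
    from path_bound[OF l1 ne this lf] have "\<bar>g q - g p\<bar> + \<bar>f z - f p\<bar> \<le> l1dist p q"
      using hd la rl by simp
    then show "f z = f p" using fpq by (simp add: l1)
  qed
  have c: "connected (path_set ps)" "p \<in> path_set ps" "q \<in> path_set ps"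
    using path_connected_set[OF ne] hd la by auto
  have ci: "connected (g ` path_set ps)"
    using c(1) by (intro connected_continuous_image linear_continuous_on) (simp add: lg linear_conv_bounded_linear[symmetric])
  show "closed_segment p q \<subseteq> path_set ps"
  proof
    fix w assume w: "w \<in> closed_segment p q"
    have fw: "f w = f p" using seg_const[OF lf w] fpq by simp
    have "min (g p) (g q) \<le> g w" "g w \<le> max (g p) (g q)" using seg_between[OF lg w] by auto
    moreover have "g p \<in> g ` path_set ps" "g q \<in> g ` path_set ps" using c by auto
    ultimately have "g w \<in> g ` path_set ps"
      using ci unfolding connected_iff_interval
      by (metis (no_types, lifting) linorder_le_cases max.absorb1 max.absorb2 min.absorb1 min.absorb2)
    then obtain z where z: "z \<in> path_set ps" "g z = g w" by auto
    have "f z = f w" using fz z fw by simp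
    then have "z = w" using inj z by blast
    then show "w \<in> path_set ps" using z by simp
  qed
qed

lemma l1_fst: "l1dist a b = \<bar>fst b - fst a\<bar> + \<bar>snd b - snd a\<bar>" by (simp add: l1dist_def)
lemma l1_snd: "l1dist a b = \<bar>snd b - snd a\<bar> + \<bar>fst b - fst a\<bar>" by (simp add: l1dist_def)

lemmas shortest_seg_v = shortest_seg[OF l1_fst lin_fst lin_snd prod_eqI]
lemmas shortest_seg_h = shortest_seg[OF l1_snd lin_snd lin_fst, of ps p q for ps p q]


definition X0 :: "pt list \<Rightarrow> real" where "X0 vs = Inf (fst ` region vs)"
definition X1 :: "pt list \<Rightarrow> real" where "X1 vs = Sup (fst ` region vs)"
definition Y0 :: "pt list \<Rightarrow> real" where "Y0 vs = Inf (snd ` region vs)"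
definition Y1 :: "pt list \<Rightarrow> real" where "Y1 vs = Sup (snd ` region vs)"

lemma compact_pb: "compact (poly_boundary vs)"
  unfolding poly_boundary_def edge_def by (intro compact_UN) auto

lemma pb_nonempty: "vs \<noteq> [] \<Longrightarrow> poly_boundary vs \<noteq> {}"
  unfolding poly_boundary_def edge_def by auto

lemma region_compact: "compact (region vs)"
proof -
  have c: "closed (poly_boundary vs)" "bounded (poly_boundary vs)"
    using compact_pb compact_imp_closed compact_imp_bounded by auto
  have "closure (inside (poly_boundary vs)) \<subseteq> region vs"
    using closure_inside_subset[OF c(1)] by (auto simp: region_def)
  moreover have "region vs \<subseteq> closure (region vs)" by (rule closure_subset)
  moreover have "closure (region vs) = closure (poly_boundary vs) \<union> closure (inside (poly_boundary vs))"
    unfolding region_def by (rule closure_Un)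
  ultimately have "closed (region vs)"
    using c(1) closure_closed[OF c(1)] by (metis Un_least closure_subset_eq region_def sup.cobounded1)
  moreover have "bounded (region vs)" unfolding region_def using c bounded_inside by auto
  ultimately show ?thesis by (simp add: compact_eq_bounded_closed)
qed

lemma inside_sub_interior: "inside (poly_boundary vs) \<subseteq> interior (region vs)"
proof -
  have "open (inside (poly_boundary vs))"
    using open_inside compact_pb compact_imp_closed by blast
  then show ?thesis by (intro interior_maximal) (auto simp: region_def)
qed

lemma proj_bounds:
  assumes "vs \<noteq> []" and "z \<in> region vs"
  shows "X0 vs \<le> fst z" "fst z \<le> X1 vs" "Y0 vs \<le> snd z" "snd z \<le> Y1 vs"
proof -
  have cf: "compact (fst ` region vs)" "compact (snd ` region vs)"
    using region_compact by (auto intro!: compact_continuous_image continuous_intros)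
  have "bounded (fst ` region vs)" "bounded (snd ` region vs)" using cf compact_imp_bounded by auto
  then have b: "bdd_below (fst ` region vs)" "bdd_above (fst ` region vs)"
    "bdd_below (snd ` region vs)" "bdd_above (snd ` region vs)"
    by (auto simp: bounded_imp_bdd_below bounded_imp_bdd_above)
  show "X0 vs \<le> fst z" "fst z \<le> X1 vs" "Y0 vs \<le> snd z" "snd z \<le> Y1 vs"
    using assms b by (auto simp: X0_def X1_def Y0_def Y1_def intro!: cInf_lower cSup_upper)
qed

lemma proj_attained:
  assumes "vs \<noteq> []"
  shows "X0 vs \<in> fst ` region vs" "X1 vs \<in> fst ` region vs" "Y0 vs \<in> snd ` region vs" "Y1 vs \<in> snd ` region vs"
proof -
  have cf: "compact (fst ` region vs)" "compact (snd ` region vs)"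
    using region_compact by (auto intro!: compact_continuous_image continuous_intros)
  have ne: "region vs \<noteq> {}" using pb_nonempty[OF assms] by (auto simp: region_def)
  have "bounded (fst ` region vs)" "bounded (snd ` region vs)" using cf compact_imp_bounded by auto
  then have b: "bdd_below (fst ` region vs)" "bdd_above (fst ` region vs)"
    "bdd_below (snd ` region vs)" "bdd_above (snd ` region vs)"
    by (auto simp: bounded_imp_bdd_below bounded_imp_bdd_above)
  show "X0 vs \<in> fst ` region vs" "X1 vs \<in> fst ` region vs" "Y0 vs \<in> snd ` region vs" "Y1 vs \<in> snd ` region vs"
    using cf b ne unfolding X0_def X1_def Y0_def Y1_def
    by (auto intro!: closed_contains_Inf closed_contains_Sup compact_imp_closed)
qed

lemma vconv_region:
  assumes "rect_convex vs"
  shows "\<forall>p\<in>region vs. \<forall>q\<in>region vs. fst p = fst q \<longrightarrow> closed_segment p q \<subseteq> region vs"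
proof (intro ballI impI)
  fix p q assume pq: "p \<in> region vs" "q \<in> region vs" "fst p = fst q"
  obtain ps where "shortest_rect_path ps p q" "path_set ps \<subseteq> region vs"
    using assms pq unfolding rect_convex_def by blast
  then show "closed_segment p q \<subseteq> region vs" using shortest_seg_v(1)[of ps p q] pq(3) by blast
qed

lemma hconv_region:
  assumes "rect_convex vs"
  shows "\<forall>p\<in>region vs. \<forall>q\<in>region vs. snd p = snd q \<longrightarrow> closed_segment p q \<subseteq> region vs"
proof (intro ballI impI)
  fix p q assume pq: "p \<in> region vs" "q \<in> region vs" "snd p = snd q"
  obtain ps where "shortest_rect_path ps p q" "path_set ps \<subseteq> region vs"
    using assms pq unfolding rect_convex_def by blast
  moreover have "closed_segment p q \<subseteq> path_set ps"
    by (rule shortest_seg_h(1)[of ps p q]) (use calculation pq(3) in \<open>auto simp: prod_eq_iff\<close>)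
  ultimately show "closed_segment p q \<subseteq> region vs" by blast
qed


lemma cc_image_sub:
  fixes h :: "'a::euclidean_space \<Rightarrow> 'b::euclidean_space" and g :: "'b \<Rightarrow> 'a"
  assumes lh: "linear h" and gh: "\<And>x. g (h x) = x" and hg: "\<And>y. h (g y) = y"
  shows "h ` connected_component_set (- S) x \<subseteq> connected_component_set (- (h ` S)) (h x)"
proof
  fix y assume "y \<in> h ` connected_component_set (- S) x"
  then obtain y0 where y0: "y = h y0" "connected_component (- S) x y0" by auto
  then obtain T where T: "connected T" "T \<subseteq> - S" "x \<in> T" "y0 \<in> T" by (auto simp: connected_component_def)
  have ch: "continuous_on UNIV h" using lh by (simp add: linear_continuous_on linear_conv_bounded_linear)
  have "connected (h ` T)" using connected_continuous_image[OF continuous_on_subset[OF ch subset_UNIV] T(1)] .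
  moreover have "h ` T \<subseteq> - (h ` S)"
  proof
    fix t assume "t \<in> h ` T"
    then obtain t0 where "t = h t0" "t0 \<in> T" by auto
    show "t \<in> - (h ` S)"
    proof
      assume "t \<in> h ` S"
      then obtain s where "s \<in> S" "t = h s" by auto
      then have "s = t0" using gh \<open>t = h t0\<close> by metis
      then show False using \<open>s \<in> S\<close> \<open>t0 \<in> T\<close> T(2) by auto
    qed
  qed
  ultimately show "y \<in> connected_component_set (- (h ` S)) (h x)"
    using T y0 by (auto simp: connected_component_def)
qed

lemma inside_linear_image:
  fixes h :: "'a::euclidean_space \<Rightarrow> 'b::euclidean_space" and g :: "'b \<Rightarrow> 'a"
  assumes lh: "linear h" and lg: "linear g" and gh: "\<And>x. g (h x) = x" and hg: "\<And>y. h (g y) = y"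
  shows "inside (h ` S) = h ` inside S"
proof -
  have gS: "g ` h ` S = S" using gh by (simp add: image_image)
  have cc: "connected_component_set (- (h ` S)) (h x) = h ` connected_component_set (- S) x" for x
  proof
    show "h ` connected_component_set (- S) x \<subseteq> connected_component_set (- (h ` S)) (h x)"
      by (rule cc_image_sub[OF lh gh hg])
    have "g ` connected_component_set (- (h ` S)) (h x) \<subseteq> connected_component_set (- (g ` h ` S)) (g (h x))"
      by (rule cc_image_sub[OF lg hg gh])
    then have "g ` connected_component_set (- (h ` S)) (h x) \<subseteq> connected_component_set (- S) x"
      using gS gh by simp
    then have "h ` g ` connected_component_set (- (h ` S)) (h x) \<subseteq> h ` connected_component_set (- S) x"
      by (rule image_mono)
    then show "connected_component_set (- (h ` S)) (h x) \<subseteq> h ` connected_component_set (- S) x"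
      using hg by (simp add: image_image)
  qed
  have bh: "bounded (h ` A) \<longleftrightarrow> bounded A" for A
  proof
    assume "bounded (h ` A)"
    then have "bounded (g ` h ` A)" using lg by (simp add: bounded_linear_image linear_conv_bounded_linear)
    then show "bounded A" using gh by (simp add: image_image)
  next
    assume "bounded A" then show "bounded (h ` A)" using lh by (simp add: bounded_linear_image linear_conv_bounded_linear)
  qed
  have injh: "inj h" using gh by (metis injI)
  show ?thesis
  proof
    show "inside (h ` S) \<subseteq> h ` inside S"
    proof
      fix y assume y: "y \<in> inside (h ` S)"
      have "y = h (g y)" using hg by simp
      moreover have "g y \<in> inside S"
        using y cc[of "g y"] bh hg unfolding inside_def by (auto simp: image_iff)
      ultimately show "y \<in> h ` inside S" by blast
    qed
    show "h ` inside S \<subseteq> inside (h ` S)"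
      using cc bh injh unfolding inside_def by (auto simp: inj_image_mem_iff) (metis injD injh)
  qed
qed

definition c_of :: "real \<times> real \<Rightarrow> complex" where "c_of z = Complex (fst z) (snd z)"
definition p_of :: "complex \<Rightarrow> real \<times> real" where "p_of w = (Re w, Im w)"

lemma lin_c_of: "linear c_of" by (simp add: linear_iff c_of_def complex_eq_iff)
lemma lin_p_of: "linear p_of" by (simp add: linear_iff p_of_def)
lemma pc: "p_of (c_of x) = x" by (simp add: p_of_def c_of_def)
lemma cp: "c_of (p_of y) = y" by (simp add: p_of_def c_of_def)

lemma jordan_pt:
  fixes c :: "real \<Rightarrow> real \<times> real"
  assumes "simple_path c" "pathfinish c = pathstart c"
  shows "connected (inside (path_image c))" "path_image c \<subseteq> closure (inside (path_image c))"
proof -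
  have injc: "inj c_of" using pc by (metis injI)
  have sp: "simple_path (c_of \<circ> c)" using assms(1) simple_path_linear_image_eq[OF lin_c_of injc] by simp
  have cl: "pathfinish (c_of \<circ> c) = pathstart (c_of \<circ> c)" using assms(2) by (simp add: pathfinish_compose pathstart_compose)
  note J = Jordan_inside_outside[OF sp cl]
  have img: "path_image (c_of \<circ> c) = c_of ` path_image c" by (rule path_image_compose)
  have ins: "inside (c_of ` path_image c) = c_of ` inside (path_image c)"
    by (rule inside_linear_image[OF lin_c_of lin_p_of pc cp])
  have ins2: "inside (path_image c) = p_of ` inside (c_of ` path_image c)"
    using ins pc by (simp add: image_image)
  have contp: "continuous_on A p_of" for A using lin_p_of by (simp add: linear_continuous_on linear_conv_bounded_linear)
  show "connected (inside (path_image c))"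
    unfolding ins2 using J img by (intro connected_continuous_image contp) auto
  show "path_image c \<subseteq> closure (inside (path_image c))"
  proof
    fix z assume z: "z \<in> path_image c"
    have "c_of z \<in> frontier (inside (c_of ` path_image c))"
      using J img z by auto
    then have "c_of z \<in> closure (inside (c_of ` path_image c))" by (simp add: frontier_def)
    then have "p_of (c_of z) \<in> p_of ` closure (inside (c_of ` path_image c))" by blast
    also have "\<dots> \<subseteq> closure (inside (path_image c))"
      by (rule image_closure_subset[OF contp]) (use ins2 closure_subset in auto)
    finally show "z \<in> closure (inside (path_image c))" using pc by simp
  qed
qed


fun chain :: "pt list \<Rightarrow> real \<Rightarrow> pt" where
  "chain [] = linepath 0 0"
| "chain [a] = linepath a a"
| "chain [a, b] = linepath a b"
| "chain (a # b # c # rest) = linepath a b +++ chain (b # c # rest)"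

lemma pseg_union_Cons2:
  "(\<Union>i\<in>{i. Suc i < length (a # b # rest)}. pseg (a # b # rest) i) =
   closed_segment a b \<union> (\<Union>i\<in>{i. Suc i < length (b # rest)}. pseg (b # rest) i)"
  unfolding idx_Cons2 by (auto simp: pseg_def)

lemma chain_props:
  assumes "length ps \<ge> 2"
  shows "pathstart (chain ps) = hd ps \<and> pathfinish (chain ps) = last ps \<and> path (chain ps) \<and>
         path_image (chain ps) = (\<Union>i\<in>{i. Suc i < length ps}. pseg ps i)"
  using assms
proof (induction ps rule: chain.induct)
  case (3 a b)
  have "{i. Suc i < length [a, b]} = {0}" by auto
  then show ?case by (simp add: pseg_def)
next
  case (4 a b c rest)
  then have IH: "pathstart (chain (b # c # rest)) = b" "pathfinish (chain (b # c # rest)) = last (c # rest)"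
    "path (chain (b # c # rest))"
    "path_image (chain (b # c # rest)) = (\<Union>i\<in>{i. Suc i < length (b # c # rest)}. pseg (b # c # rest) i)"
    by auto
  have e: "(\<Union>i\<in>{i. Suc i < length (a # b # c # rest)}. pseg (a # b # c # rest) i) =
     closed_segment a b \<union> (\<Union>i\<in>{i. Suc i < length (b # c # rest)}. pseg (b # c # rest) i)"
    by (rule pseg_union_Cons2)
  have pi: "path_image (chain (a # b # c # rest)) = closed_segment a b \<union> path_image (chain (b # c # rest))"
    using IH(1) by (simp add: path_image_join)
  show ?case
  proof (intro conjI)
    show "path_image (chain (a # b # c # rest)) = (\<Union>i\<in>{i. Suc i < length (a # b # c # rest)}. pseg (a # b # c # rest) i)"
      by (simp only: pi IH(4) e)
  qed (use IH in auto)
qed auto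

definition okchain :: "pt list \<Rightarrow> bool" where
  "okchain ps \<longleftrightarrow> (\<forall>i. Suc i < length ps \<longrightarrow> ps ! i \<noteq> ps ! Suc i) \<and>
     (\<forall>i j. i < j \<longrightarrow> Suc j < length ps \<longrightarrow> pseg ps i \<inter> pseg ps j \<subseteq> (if j = Suc i then {ps ! j} else {}))"

lemma okchain_tl: "okchain (a # ps) \<Longrightarrow> okchain ps"
proof -
  assume h: "okchain (a # ps)"
  have h1: "\<forall>i. Suc i < length (a # ps) \<longrightarrow> (a # ps) ! i \<noteq> (a # ps) ! Suc i" using h by (simp add: okchain_def)
  have h2: "\<forall>i j. i < j \<longrightarrow> Suc j < length (a # ps) \<longrightarrow> pseg (a # ps) i \<inter> pseg (a # ps) j \<subseteq> (if j = Suc i then {(a # ps) ! j} else {})"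
    using h unfolding okchain_def by blast
  have p: "pseg (a # ps) (Suc i) = pseg ps i" for i by (simp add: pseg_def)
  show "okchain ps" unfolding okchain_def
  proof (intro conjI allI impI)
    fix i assume "Suc i < length ps"
    then have "Suc (Suc i) < length (a # ps)" by simp
    then have "(a # ps) ! Suc i \<noteq> (a # ps) ! Suc (Suc i)" using h1 by blast
    then show "ps ! i \<noteq> ps ! Suc i" by simp
  next
    fix i j assume ij: "i < j" "Suc j < length ps"
    then have "Suc i < Suc j" "Suc (Suc j) < length (a # ps)" by auto
    then have hh: "pseg (a # ps) (Suc i) \<inter> pseg (a # ps) (Suc j) \<subseteq> (if Suc j = Suc (Suc i) then {(a # ps) ! Suc j} else {})"
      using h2 by blast
    show "pseg ps i \<inter> pseg ps j \<subseteq> (if j = Suc i then {ps ! j} else {})"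
    proof (cases "j = Suc i")
      case True
      then have "pseg (a # ps) (Suc i) \<inter> pseg (a # ps) (Suc j) \<subseteq> {(a # ps) ! Suc j}" using hh by simp
      then show ?thesis using True unfolding p by simp
    next
      case False
      then have "pseg (a # ps) (Suc i) \<inter> pseg (a # ps) (Suc j) \<subseteq> {}" using hh by simp
      then show ?thesis using False unfolding p by simp
    qed
  qed
qed

lemma arc_chain:
  assumes "length ps \<ge> 2" "okchain ps"
  shows "arc (chain ps)"
  using assms
proof (induction ps rule: chain.induct)
  case (3 a b)
  then have "a \<noteq> b" by (auto simp: okchain_def)
  then show ?case by simp
next
  case (4 a b c rest)
  have IH: "arc (chain (b # c # rest))" using 4 okchain_tl by auto
  have P: "pathstart (chain (b # c # rest)) = b"
    "path_image (chain (b # c # rest)) = (\<Union>i\<in>{i. Suc i < length (b # c # rest)}. pseg (b # c # rest) i)"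
    using chain_props[of "b # c # rest"] by auto
  have ab: "a \<noteq> b" using "4.prems"(2) by (auto simp: okchain_def)
  have int: "closed_segment a b \<inter> path_image (chain (b # c # rest)) \<subseteq> {b}"
  proof
    fix z assume z: "z \<in> closed_segment a b \<inter> path_image (chain (b # c # rest))"
    then obtain j where j: "Suc j < length (b # c # rest)" "z \<in> pseg (b # c # rest) j" using P by auto
    have h2: "\<forall>i j. i < j \<longrightarrow> Suc j < length (a # b # c # rest) \<longrightarrow> pseg (a # b # c # rest) i \<inter> pseg (a # b # c # rest) j
        \<subseteq> (if j = Suc i then {(a # b # c # rest) ! j} else {})"
      using "4.prems"(2) unfolding okchain_def by blast
    have "0 < Suc j" "Suc (Suc j) < length (a # b # c # rest)" using j(1) by auto
    then have hh: "pseg (a # b # c # rest) 0 \<inter> pseg (a # b # c # rest) (Suc j) \<subseteq>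
          (if Suc j = Suc 0 then {(a # b # c # rest) ! Suc j} else {})"
      using h2 by blast
    moreover have "z \<in> pseg (a # b # c # rest) 0" "z \<in> pseg (a # b # c # rest) (Suc j)"
      using z j by (auto simp: pseg_def)
    ultimately show "z \<in> {b}"
    proof (cases "j = 0")
      case True then show ?thesis using hh \<open>z \<in> pseg (a # b # c # rest) 0\<close> \<open>z \<in> pseg (a # b # c # rest) (Suc j)\<close> by auto
    next
      case False then show ?thesis using hh \<open>z \<in> pseg (a # b # c # rest) 0\<close> \<open>z \<in> pseg (a # b # c # rest) (Suc j)\<close> by auto
    qed
  qed
  show ?case by simp (rule arc_join, use ab IH P int in auto)
qed auto


lemma vtx_mod: "vtx vs (k mod length vs) = vtx vs k"
  by (simp add: vtx_def)

lemma vtx_in_set: "vs \<noteq> [] \<Longrightarrow> vtx vs k \<in> set vs"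
  by (simp add: vtx_def)

lemma edge_mod: "edge vs (k mod length vs) = edge vs k"
  by (simp add: edge_def vtx_def mod_Suc_eq)

lemma vtx_eq_iff:
  assumes "distinct vs" "vs \<noteq> []"
  shows "vtx vs i = vtx vs j \<longleftrightarrow> i mod length vs = j mod length vs"
  using assms by (simp add: vtx_def nth_eq_iff_index_eq)

lemma mod_ne_shift:
  fixes k d n :: nat
  assumes "0 < d" "d < n"
  shows "(k + d) mod n \<noteq> k mod n"
proof
  assume "(k + d) mod n = k mod n"
  then have "n dvd (k + d) - k" using mod_eq_dvd_iff_nat[of k "k + d" n] by simp
  then have "n dvd d" by simp
  then show False using assms by (simp add: nat_dvd_not_less)
qed

lemma collinear_same_fst:
  fixes a b c :: pt
  assumes "fst a = fst b" "fst b = fst c"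
  shows "collinear {a, b, c}"
  unfolding collinear_def
  by (rule exI[of _ "(0, 1)"]) (use assms in \<open>auto intro!: exI simp: prod_eq_iff\<close>)

lemma collinear_same_snd:
  fixes a b c :: pt
  assumes "snd a = snd b" "snd b = snd c"
  shows "collinear {a, b, c}"
  unfolding collinear_def
  by (rule exI[of _ "(1, 0)"]) (use assms in \<open>auto intro!: exI simp: prod_eq_iff\<close>)

lemma three_distinct:
  assumes ob: "obstacle vs"
  shows "vtx vs (k + length vs - 1) \<noteq> vtx vs k" "vtx vs k \<noteq> vtx vs (Suc k)"
        "vtx vs (k + length vs - 1) \<noteq> vtx vs (Suc k)"
proof -
  let ?n = "length vs"
  have n3: "?n \<ge> 3" and dist: "distinct vs" using ob by (auto simp: obstacle_def simple_polygon_def)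
  have ne: "vs \<noteq> []" using n3 by auto
  have "(k + (?n - 1)) mod ?n \<noteq> k mod ?n" using mod_ne_shift[of "?n - 1" ?n k] n3 by simp
  then show "vtx vs (k + length vs - 1) \<noteq> vtx vs k" using vtx_eq_iff[OF dist ne] n3
    by (simp add: add.commute)
  have "(k + 1) mod ?n \<noteq> k mod ?n" using mod_ne_shift[of 1 ?n k] n3 by simp
  then show "vtx vs k \<noteq> vtx vs (Suc k)" using vtx_eq_iff[OF dist ne] by simp
  have a: "((k + 1) + (?n - 2)) mod ?n \<noteq> (k + 1) mod ?n" using mod_ne_shift[of "?n - 2" ?n "k + 1"] n3 by simp
  have b: "(k + 1) + (?n - 2) = k + ?n - 1" using n3 by simp
  have "(k + ?n - 1) mod ?n \<noteq> Suc k mod ?n" using a unfolding b by simp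
  then show "vtx vs (k + length vs - 1) \<noteq> vtx vs (Suc k)" using vtx_eq_iff[OF dist ne] by simp
qed

lemma prev_index:
  assumes "length vs \<ge> 1"
  shows "(k + length vs - 1) mod length vs < length vs"
    "vtx vs ((k + length vs - 1) mod length vs) = vtx vs (k + length vs - 1)"
    "vtx vs (Suc ((k + length vs - 1) mod length vs)) = vtx vs k"
proof -
  let ?n = "length vs"
  show "(k + ?n - 1) mod ?n < ?n" using assms by (intro mod_less_divisor) auto
  show "vtx vs ((k + ?n - 1) mod ?n) = vtx vs (k + ?n - 1)" by (rule vtx_mod)
  have "Suc ((k + ?n - 1) mod ?n) mod ?n = Suc (k + ?n - 1) mod ?n" by (simp add: mod_Suc_eq)
  also have "Suc (k + ?n - 1) = k + ?n" using assms by simp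
  also have "(k + ?n) mod ?n = k mod ?n" by simp
  finally show "vtx vs (Suc ((k + ?n - 1) mod ?n)) = vtx vs k" by (simp add: vtx_def)
qed

lemma vertex_HV:
  assumes ob: "obstacle vs" and rl: "rectilinear vs"
  shows "\<exists>i<length vs. horizontal_edge vs i \<and> vtx vs k \<in> edge vs i"
    "\<exists>i<length vs. vertical_edge vs i \<and> vtx vs k \<in> edge vs i"
proof -
  let ?n = "length vs"
  have n3: "?n \<ge> 3" using ob by (auto simp: obstacle_def simple_polygon_def)
  have gp: "general_position vs" using ob by (simp add: obstacle_def)
  have ne: "vs \<noteq> []" using n3 by auto
  define i0 where "i0 = (k + ?n - 1) mod ?n"
  define i1 where "i1 = k mod ?n"
  have i01: "i0 < ?n" "i1 < ?n" using n3 by (auto simp: i0_def i1_def intro!: mod_less_divisor)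
  have v0: "vtx vs i0 = vtx vs (k + ?n - 1)" "vtx vs (Suc i0) = vtx vs k"
    using prev_index[of vs k] n3 by (auto simp: i0_def)
  have v1: "vtx vs i1 = vtx vs k" "vtx vs (Suc i1) = vtx vs (Suc k)"
    by (simp_all add: i1_def vtx_mod edge_def vtx_def mod_Suc_eq)
  have inn: "vtx vs k \<in> edge vs i0" "vtx vs k \<in> edge vs i1"
    using v0 v1 by (auto simp: edge_def)
  have d3: "vtx vs (k + ?n - 1) \<noteq> vtx vs k" "vtx vs k \<noteq> vtx vs (Suc k)" "vtx vs (k + ?n - 1) \<noteq> vtx vs (Suc k)"
    using three_distinct[OF ob] by auto
  have ncol: "\<not> collinear {vtx vs (k + ?n - 1), vtx vs k, vtx vs (Suc k)}"
    using gp d3 vtx_in_set[OF ne] unfolding general_position_def by blast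
  have r0: "horizontal_edge vs i0 \<or> vertical_edge vs i0" and r1: "horizontal_edge vs i1 \<or> vertical_edge vs i1"
    using rl i01 by (auto simp: rectilinear_def horizontal_edge_def vertical_edge_def)
  have "\<not> (vertical_edge vs i0 \<and> vertical_edge vs i1)"
    using ncol collinear_same_fst v0 v1 by (metis vertical_edge_def)
  moreover have "\<not> (horizontal_edge vs i0 \<and> horizontal_edge vs i1)"
    using ncol collinear_same_snd v0 v1 by (metis horizontal_edge_def)
  ultimately show "\<exists>i<length vs. horizontal_edge vs i \<and> vtx vs k \<in> edge vs i"
    "\<exists>i<length vs. vertical_edge vs i \<and> vtx vs k \<in> edge vs i"
    using r0 r1 i01 inn by blast+
qed

lemma edge_sub_region: "i < length vs \<Longrightarrow> edge vs i \<subseteq> region vs"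
  by (auto simp: region_def poly_boundary_def)

lemma extreme_point_edge:
  fixes f :: "pt \<Rightarrow> real" and d :: pt
  assumes ob: "obstacle vs" and lf: "linear f" and fd: "f d < 0"
    and minf: "\<forall>w\<in>region vs. M \<le> f w" and z: "z \<in> region vs" "f z = M"
    and vD: "\<forall>k. \<exists>i<length vs. f (vtx vs i) = f (vtx vs (Suc i)) \<and> vtx vs k \<in> edge vs i"
  shows "\<exists>i<length vs. f (vtx vs i) = f (vtx vs (Suc i)) \<and> z \<in> edge vs i \<and> (\<forall>w\<in>edge vs i. f w = M)"
proof -
  have cl: "closed (poly_boundary vs)" using compact_pb compact_imp_closed by auto
  have zni: "z \<notin> inside (poly_boundary vs)"
  proof
    assume zi: "z \<in> inside (poly_boundary vs)"
    then obtain e where e: "e > 0" "ball z e \<subseteq> inside (poly_boundary vs)"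
      using open_inside[OF cl] open_contains_ball by blast
    have dn: "d \<noteq> 0" using fd lf by (auto simp: linear_0)
    define t where "t = e / (2 * norm d)"
    have t: "t > 0" using e dn by (simp add: t_def)
    have "norm (t *\<^sub>R d) < e" using e dn by (simp add: t_def)
    then have "z + t *\<^sub>R d \<in> ball z e" by (simp add: dist_norm)
    then have "z + t *\<^sub>R d \<in> region vs" using e by (auto simp: region_def)
    then have "M \<le> f (z + t *\<^sub>R d)" using minf by blast
    moreover have "f (z + t *\<^sub>R d) = M + t * f d" using z(2) linear_add[OF lf] linear_scale[OF lf] by simp
    moreover have "t * f d < 0" using t fd by (simp add: mult_pos_neg)
    ultimately show False by simp
  qed
  then have "z \<in> poly_boundary vs" using z by (auto simp: region_def)
  then obtain i where i: "i < length vs" "z \<in> edge vs i" by (auto simp: poly_boundary_def)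
  have const: "\<forall>w\<in>edge vs j. f w = M" if "f (vtx vs j) = f (vtx vs (Suc j))" "z \<in> edge vs j" for j
  proof
    fix w assume "w \<in> edge vs j"
    then have "f w = f (vtx vs j)" using seg_const[OF lf, of w "vtx vs j" "vtx vs (Suc j)"] that by (simp add: edge_def)
    moreover have "f z = f (vtx vs j)" using seg_const[OF lf, of z "vtx vs j" "vtx vs (Suc j)"] that by (simp add: edge_def)
    ultimately show "f w = M" using z(2) by simp
  qed
  show ?thesis
  proof (cases "f (vtx vs i) = f (vtx vs (Suc i))")
    case True then show ?thesis using const i by blast
  next
    case False
    have ends: "vtx vs i \<in> region vs" "vtx vs (Suc i) \<in> region vs" using edge_sub_region[OF i(1)] by (auto simp: edge_def)
    have "z = vtx vs i \<or> z = vtx vs (Suc i) \<or> (f (vtx vs i) = M \<and> f (vtx vs (Suc i)) = M)"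
      by (rule seg_extreme_min[OF lf]) (use i ends minf z in \<open>auto simp: edge_def\<close>)
    then obtain k where "z = vtx vs k" using False by auto
    then obtain j where "j < length vs" "f (vtx vs j) = f (vtx vs (Suc j))" "z \<in> edge vs j" using vD by blast
    then show ?thesis using const by blast
  qed
qed

lemma bbox_region:
  "bbox (region vs) = {x. X0 vs \<le> fst x \<and> fst x \<le> X1 vs \<and> Y0 vs \<le> snd x \<and> snd x \<le> Y1 vs}"
  by (simp add: bbox_def X0_def X1_def Y0_def Y1_def)

lemma frontier_bbox:
  assumes ne: "vs \<noteq> []" and w: "w \<in> region vs"
    and side: "fst w = X0 vs \<or> fst w = X1 vs \<or> snd w = Y0 vs \<or> snd w = Y1 vs"
  shows "w \<in> frontier (bbox (region vs))"
proof -
  let ?B = "bbox (region vs)"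
  have cB: "closed ?B" unfolding bbox_region
    by (intro closed_Collect_conj closed_Collect_le continuous_intros)
  have wB: "w \<in> ?B" using proj_bounds[OF ne w] by (simp add: bbox_region)
  have "w \<notin> interior ?B"
  proof
    assume "w \<in> interior ?B"
    then obtain e where e0: "e > 0" "ball w e \<subseteq> interior ?B" using open_interior[of ?B] open_contains_ball by blast
    then have e: "e > 0" "ball w e \<subseteq> ?B" using interior_subset by blast+
    define h where "h = e / 2"
    have h: "h > 0" "h < e" using e by (auto simp: h_def)
    have inb: "w + v \<in> ?B" if "norm v < e" for v using e(2) that by (auto simp: dist_norm)
    consider "fst w = X0 vs" | "fst w = X1 vs" | "snd w = Y0 vs" | "snd w = Y1 vs" using side by blast
    then show False
    proof cases
      case 1 have "w + (-h, 0) \<in> ?B" using inb h by (simp add: norm_Pair)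
      then show False using 1 h by (simp add: bbox_region)
    next
      case 2 have "w + (h, 0) \<in> ?B" using inb h by (simp add: norm_Pair)
      then show False using 2 h by (simp add: bbox_region)
    next
      case 3 have "w + (0, -h) \<in> ?B" using inb h by (simp add: norm_Pair)
      then show False using 3 h by (simp add: bbox_region)
    next
      case 4 have "w + (0, h) \<in> ?B" using inb h by (simp add: norm_Pair)
      then show False using 4 h by (simp add: bbox_region)
    qed
  qed
  then show ?thesis using wB cB by (simp add: frontier_def closure_closed)
qed


lemma pseg_vs: "Suc i < length vs \<Longrightarrow> pseg vs i = edge vs i"
  by (simp add: pseg_def edge_def vtx_def)

lemma okchain_vs:
  assumes ob: "obstacle vs"
  shows "okchain vs"
proof -
  let ?n = "length vs"
  have sp: "simple_polygon vs" using ob by (simp add: obstacle_def)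
  have n3: "?n \<ge> 3" and dist: "distinct vs" using sp by (auto simp: simple_polygon_def)
  have sp1: "\<forall>k<?n. edge vs k \<inter> edge vs (Suc k) = {vtx vs (Suc k)}" using sp by (simp add: simple_polygon_def)
  have sp2: "\<forall>k<?n. \<forall>l<?n. k \<noteq> l \<and> l \<noteq> Suc k mod ?n \<and> k \<noteq> Suc l mod ?n \<longrightarrow> edge vs k \<inter> edge vs l = {}"
    using sp by (simp add: simple_polygon_def)
  show ?thesis unfolding okchain_def
  proof (intro conjI allI impI)
    fix i assume "Suc i < ?n"
    then show "vs ! i \<noteq> vs ! Suc i" using dist by (simp add: nth_eq_iff_index_eq)
  next
    fix i j assume ij: "i < j" "Suc j < ?n"
    have pe: "pseg vs i = edge vs i" "pseg vs j = edge vs j" using ij by (auto simp: pseg_vs)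
    show "pseg vs i \<inter> pseg vs j \<subseteq> (if j = Suc i then {vs ! j} else {})"
    proof (cases "j = Suc i")
      case True
      have "vtx vs (Suc i) = vs ! j" using True ij by (simp add: vtx_def)
      then show ?thesis using sp1 ij True pe by auto
    next
      case False
      have "Suc i mod ?n = Suc i" "Suc j mod ?n = Suc j" using ij by auto
      then have "edge vs i \<inter> edge vs j = {}" using sp2 ij False by auto
      then show ?thesis using False pe by simp
    qed
  qed
qed

lemma polygon_loop:
  assumes ob: "obstacle vs"
  defines "c \<equiv> chain vs +++ linepath (last vs) (hd vs)"
  shows "simple_path c" "pathfinish c = pathstart c" "path_image c = poly_boundary vs"
proof -
  let ?n = "length vs"
  have sp: "simple_polygon vs" using ob by (simp add: obstacle_def)
  have n3: "?n \<ge> 3" and dist: "distinct vs" using sp by (auto simp: simple_polygon_def)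
  have ne: "vs \<noteq> []" using n3 by auto
  have sp1: "\<forall>k<?n. edge vs k \<inter> edge vs (Suc k) = {vtx vs (Suc k)}" using sp by (simp add: simple_polygon_def)
  have sp2: "\<forall>k<?n. \<forall>l<?n. k \<noteq> l \<and> l \<noteq> Suc k mod ?n \<and> k \<noteq> Suc l mod ?n \<longrightarrow> edge vs k \<inter> edge vs l = {}"
    using sp by (simp add: simple_polygon_def)
  have CP: "pathstart (chain vs) = hd vs" "pathfinish (chain vs) = last vs"
    "path_image (chain vs) = (\<Union>i\<in>{i. Suc i < ?n}. pseg vs i)"
    using chain_props[of vs] n3 by auto
  have lastv: "last vs = vtx vs (?n - 1)" using ne n3 by (simp add: vtx_def last_conv_nth)
  have hdv: "hd vs = vtx vs (Suc (?n - 1))" using ne n3 by (simp add: vtx_def hd_conv_nth)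
  have lastE: "closed_segment (last vs) (hd vs) = edge vs (?n - 1)" using lastv hdv by (simp add: edge_def)
  have img: "path_image (chain vs) = (\<Union>i\<in>{i. Suc i < ?n}. edge vs i)" using CP(3) pseg_vs by auto
  have lh: "last vs \<noteq> hd vs"
  proof -
    have "?n - 1 < ?n" "0 < ?n" "?n - 1 \<noteq> 0" using n3 by auto
    then show ?thesis using dist ne by (simp add: last_conv_nth hd_conv_nth nth_eq_iff_index_eq)
  qed
  have inter: "path_image (chain vs) \<inter> path_image (linepath (last vs) (hd vs)) \<subseteq> {hd vs, last vs}"
  proof
    fix z assume "z \<in> path_image (chain vs) \<inter> path_image (linepath (last vs) (hd vs))"
    then obtain i where i: "Suc i < ?n" "z \<in> edge vs i" "z \<in> edge vs (?n - 1)" using img lastE by auto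
    show "z \<in> {hd vs, last vs}"
    proof (cases "i = 0")
      case True
      have "Suc (?n - 1) = ?n" using n3 by simp
      then have "Suc (?n - 1) mod ?n = 0" by simp
      then have "edge vs (Suc (?n - 1)) = edge vs 0" using edge_mod[of vs "Suc (?n - 1)"] by simp
      then have "z \<in> edge vs (?n - 1) \<inter> edge vs (Suc (?n - 1))" using i True by simp
      then have "z = vtx vs (Suc (?n - 1))" using sp1 n3 by auto
      then show ?thesis using hdv by simp
    next
      case False
      show ?thesis
      proof (cases "Suc i = ?n - 1")
        case True
        have "i < ?n" using i by simp
        then have "edge vs i \<inter> edge vs (Suc i) = {vtx vs (Suc i)}" using sp1 by blast
        then have "z = vtx vs (?n - 1)" using i True by auto
        then show ?thesis using lastv by simp
      next
        case F2: False
        have "Suc i mod ?n = Suc i" using i by simp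
        moreover have "Suc (?n - 1) = ?n" using n3 by simp
        then have "Suc (?n - 1) mod ?n = 0" by simp
        ultimately have a: "i < ?n" "?n - 1 < ?n" "i \<noteq> ?n - 1" "?n - 1 \<noteq> Suc i mod ?n" "i \<noteq> Suc (?n - 1) mod ?n"
          using i False F2 n3 by auto
        have "edge vs i \<inter> edge vs (?n - 1) = {}" using sp2 a by blast
        then show ?thesis using i by blast
      qed
    qed
  qed
  show "simple_path c" unfolding c_def
    by (rule simple_path_join_loop) (use arc_chain[OF _ okchain_vs[OF ob]] n3 lh CP inter in auto)
  show "pathfinish c = pathstart c" unfolding c_def using CP by simp
  have "path_image c = path_image (chain vs) \<union> closed_segment (last vs) (hd vs)"
    unfolding c_def using CP by (simp add: path_image_join)
  also have "\<dots> = (\<Union>i\<in>{i. Suc i < ?n}. edge vs i) \<union> edge vs (?n - 1)" using img lastE by simp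
  also have "\<dots> = poly_boundary vs"
  proof -
    have "{i. i < ?n} = insert (?n - 1) {i. Suc i < ?n}" using n3 by auto
    then show ?thesis unfolding poly_boundary_def by (auto simp: lessThan_def)
  qed
  finally show "path_image c = poly_boundary vs" .
qed

lemma jordan_facts':
  assumes "obstacle vs"
  shows "connected (inside (poly_boundary vs))" "poly_boundary vs \<subseteq> closure (inside (poly_boundary vs))"
  using jordan_pt[OF polygon_loop(1,2)[OF assms]] polygon_loop(3)[OF assms] by auto


lemma jordan_facts:
  assumes "obstacle vs"
  shows "connected (inside (poly_boundary vs))" "poly_boundary vs \<subseteq> closure (inside (poly_boundary vs))"
  using jordan_facts'[OF assms] by auto

lemma region_closure:
  assumes "obstacle vs"
  shows "region vs = closure (inside (poly_boundary vs))"
proof -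
  have c: "closed (poly_boundary vs)" using compact_pb compact_imp_closed by auto
  show ?thesis using jordan_facts(2)[OF assms] closure_inside_subset[OF c] closure_subset[of "inside (poly_boundary vs)"]
    unfolding region_def by blast
qed

lemma obstacle_ne: "obstacle vs \<Longrightarrow> vs \<noteq> []"
  by (auto simp: obstacle_def simple_polygon_def)

lemma fst_region_interval:
  assumes "obstacle vs" "X0 vs \<le> x" "x \<le> X1 vs"
  shows "x \<in> fst ` region vs"
proof -
  have "connected (region vs)" using region_closure[OF assms(1)] jordan_facts(1)[OF assms(1)]
    by (simp add: connected_imp_connected_closure)
  then have "connected (fst ` region vs)" by (intro connected_continuous_image continuous_intros)
  then show ?thesis using proj_attained[OF obstacle_ne[OF assms(1)]] assms(2,3)
    unfolding connected_iff_interval by blast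
qed

lemma snd_region_interval:
  assumes "obstacle vs" "Y0 vs \<le> y" "y \<le> Y1 vs"
  shows "y \<in> snd ` region vs"
proof -
  have "connected (region vs)" using region_closure[OF assms(1)] jordan_facts(1)[OF assms(1)]
    by (simp add: connected_imp_connected_closure)
  then have "connected (snd ` region vs)" by (intro connected_continuous_image continuous_intros)
  then show ?thesis using proj_attained[OF obstacle_ne[OF assms(1)]] assms(2,3)
    unfolding connected_iff_interval by blast
qed

lemma two_point_ocp:
  assumes "fst p = fst q \<or> snd p = snd q"
  shows "path_set [p, q] \<in> one_corner_paths p q"
proof -
  have "rect_path [p, q]" using assms by (auto simp: rect_path_def)
  then have "shortest_rect_path [p, q] p q"
    by (simp add: shortest_rect_path_def rlen_Cons2 rlen_single)
  moreover have "corners [p, q] = {}" by (auto simp: corners_def)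
  ultimately show ?thesis
    unfolding one_corner_paths_def by blast
qed

lemma path_set_two: "path_set [p, q] = closed_segment p q"
  by (auto simp: path_set_Cons2 path_set_single)

lemma cover_line_x:
  assumes sk: "skeleton vs S" and ne: "vs \<noteq> []" and w: "w \<in> interior (region vs)"
  shows "\<exists>z\<in>\<Union>S. fst z = fst w"
proof -
  have wr: "w \<in> region vs" using w interior_subset by blast
  define p where "p = (fst w, Y0 vs - 1)"
  define q where "q = (fst w, Y1 vs + 1)"
  have pn: "p \<notin> interior (region vs)" "q \<notin> interior (region vs)"
    using proj_bounds[OF ne] interior_subset by (force simp: p_def q_def)+
  have wpq: "w \<in> closed_segment p q"
    by (rule vert_in_seg) (use proj_bounds[OF ne wr] in \<open>auto simp: p_def q_def\<close>)
  have "\<forall>P\<in>one_corner_paths p q. P \<inter> interior (region vs) \<noteq> {}"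
  proof
    fix P assume "P \<in> one_corner_paths p q"
    then obtain ps where "P = path_set ps" "shortest_rect_path ps p q" unfolding one_corner_paths_def by blast
    then have "closed_segment p q \<subseteq> P" using shortest_seg_v(1)[of ps p q] by (simp add: p_def q_def)
    then show "P \<inter> interior (region vs) \<noteq> {}" using wpq w by blast
  qed
  then have hit: "\<forall>P\<in>one_corner_paths p q. \<exists>s\<in>S. P \<inter> s \<noteq> {}"
    using sk pn unfolding skeleton_def by blast
  have "path_set [p, q] \<in> one_corner_paths p q" by (rule two_point_ocp) (simp add: p_def q_def)
  then obtain s where s: "s \<in> S" "closed_segment p q \<inter> s \<noteq> {}"
    using hit unfolding path_set_two by blast
  then obtain z where "z \<in> s" "z \<in> closed_segment p q" by blast
  moreover have "fst z = fst w" using seg_const[OF lin_fst \<open>z \<in> closed_segment p q\<close>] by (simp add: p_def q_def)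
  ultimately show ?thesis using s by blast
qed

lemma cover_line_y:
  assumes sk: "skeleton vs S" and ne: "vs \<noteq> []" and w: "w \<in> interior (region vs)"
  shows "\<exists>z\<in>\<Union>S. snd z = snd w"
proof -
  have wr: "w \<in> region vs" using w interior_subset by blast
  define p where "p = (X0 vs - 1, snd w)"
  define q where "q = (X1 vs + 1, snd w)"
  have pn: "p \<notin> interior (region vs)" "q \<notin> interior (region vs)"
    using proj_bounds[OF ne] interior_subset by (force simp: p_def q_def)+
  have wpq: "w \<in> closed_segment p q"
  proof -
    have "prod.swap w \<in> closed_segment (prod.swap p) (prod.swap q)"
      by (rule vert_in_seg) (use proj_bounds[OF ne wr] in \<open>auto simp: p_def q_def\<close>)
    then obtain u where "0 \<le> u" "u \<le> 1" "prod.swap w = (1 - u) *\<^sub>R prod.swap p + u *\<^sub>R prod.swap q"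
      by (auto simp: in_segment)
    then show ?thesis by (auto simp: in_segment prod_eq_iff)
  qed
  have "\<forall>P\<in>one_corner_paths p q. P \<inter> interior (region vs) \<noteq> {}"
  proof
    fix P assume "P \<in> one_corner_paths p q"
    then obtain ps where "P = path_set ps" "shortest_rect_path ps p q" unfolding one_corner_paths_def by blast
    then have "closed_segment p q \<subseteq> P" using shortest_seg_h(1)[of ps p q] by (simp add: p_def q_def prod_eq_iff)
    then show "P \<inter> interior (region vs) \<noteq> {}" using wpq w by blast
  qed
  then have hit: "\<forall>P\<in>one_corner_paths p q. \<exists>s\<in>S. P \<inter> s \<noteq> {}"
    using sk pn unfolding skeleton_def by blast
  have "path_set [p, q] \<in> one_corner_paths p q" by (rule two_point_ocp) (simp add: p_def q_def)
  then obtain s where s: "s \<in> S" "closed_segment p q \<inter> s \<noteq> {}"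
    using hit unfolding path_set_two by blast
  then obtain z where "z \<in> s" "z \<in> closed_segment p q" by blast
  moreover have "snd z = snd w" using seg_const[OF lin_snd \<open>z \<in> closed_segment p q\<close>] by (simp add: p_def q_def)
  ultimately show ?thesis using s by blast
qed

lemma compact_US:
  assumes "skeleton vs S" shows "compact (\<Union>S)"
proof -
  have "finite S" "\<forall>s\<in>S. is_closed_segment s" using assms by (auto simp: skeleton_def)
  then show ?thesis by (intro compact_Union) (auto simp: is_closed_segment_def)
qed

lemma cover_x:
  assumes ob: "obstacle vs" and sk: "skeleton vs S" and x: "X0 vs \<le> x" "x \<le> X1 vs"
  shows "\<exists>z\<in>\<Union>S. fst z = x"
proof -
  have ne: "vs \<noteq> []" using obstacle_ne[OF ob] .
  have cl: "closed (fst ` \<Union>S)"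
    using compact_US[OF sk] by (intro compact_imp_closed compact_continuous_image continuous_intros)
  obtain z where z: "z \<in> region vs" "fst z = x" using fst_region_interval[OF ob x] by auto
  have zc: "z \<in> closure (inside (poly_boundary vs))" using z region_closure[OF ob] by simp
  have "x \<in> closure (fst ` \<Union>S)"
    unfolding closure_approachable
  proof (intro allI impI)
    fix e :: real assume e: "e > 0"
    obtain w where w: "w \<in> inside (poly_boundary vs)" "dist z w < e"
      using closure_approachableD[OF zc e] by blast
    obtain z' where z': "z' \<in> \<Union>S" "fst z' = fst w"
      using cover_line_x[OF sk ne] w(1) inside_sub_interior by blast
    have "dist (fst w) x \<le> dist w z" using dist_fst_le[of w z] z(2) by simp
    then show "\<exists>y\<in>fst ` \<Union>S. dist y x < e" using z' w(2) by (metis dist_commute image_eqI le_less_trans)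
  qed
  then show ?thesis using cl closure_closed by fastforce
qed

lemma cover_y:
  assumes ob: "obstacle vs" and sk: "skeleton vs S" and y: "Y0 vs \<le> y" "y \<le> Y1 vs"
  shows "\<exists>z\<in>\<Union>S. snd z = y"
proof -
  have ne: "vs \<noteq> []" using obstacle_ne[OF ob] .
  have cl: "closed (snd ` \<Union>S)"
    using compact_US[OF sk] by (intro compact_imp_closed compact_continuous_image continuous_intros)
  obtain z where z: "z \<in> region vs" "snd z = y" using snd_region_interval[OF ob y] by auto
  have zc: "z \<in> closure (inside (poly_boundary vs))" using z region_closure[OF ob] by simp
  have "y \<in> closure (snd ` \<Union>S)"
    unfolding closure_approachable
  proof (intro allI impI)
    fix e :: real assume e: "e > 0"
    obtain w where w: "w \<in> inside (poly_boundary vs)" "dist z w < e"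
      using closure_approachableD[OF zc e] by blast
    obtain z' where z': "z' \<in> \<Union>S" "snd z' = snd w"
      using cover_line_y[OF sk ne] w(1) inside_sub_interior by blast
    have "dist (snd w) y \<le> dist w z" using dist_snd_le[of w z] z(2) by simp
    then show "\<exists>y'\<in>snd ` \<Union>S. dist y' y < e" using z' w(2) by (metis dist_commute image_eqI le_less_trans)
  qed
  then show ?thesis using cl closure_closed by fastforce
qed


lemma rc_rl: "rect_convex vs \<Longrightarrow> rectilinear vs" by (simp add: rect_convex_def)

lemma edge_frontier:
  assumes ob: "obstacle vs" and i: "i < length vs"
    and side: "\<forall>w\<in>edge vs i. fst w = X0 vs \<or> fst w = X1 vs \<or> snd w = Y0 vs \<or> snd w = Y1 vs"
  shows "extreme_edge vs i"
  unfolding extreme_edge_def using i side edge_sub_region[OF i] frontier_bbox[OF obstacle_ne[OF ob]] by blast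

lemma ext_bot:
  assumes ob: "obstacle vs" and rl: "rectilinear vs" and z: "z \<in> region vs" "snd z = Y0 vs"
  shows "\<exists>i. extreme_edge vs i \<and> horizontal_edge vs i \<and> z \<in> edge vs i \<and> (\<forall>w\<in>edge vs i. snd w = Y0 vs)"
proof -
  have "\<exists>i<length vs. snd (vtx vs i) = snd (vtx vs (Suc i)) \<and> z \<in> edge vs i \<and> (\<forall>w\<in>edge vs i. snd w = Y0 vs)"
    by (rule extreme_point_edge[OF ob lin_snd, of "(0, -1)"])
       (use proj_bounds[OF obstacle_ne[OF ob]] z vertex_HV(1)[OF ob rl] in \<open>auto simp: horizontal_edge_def\<close>)
  then show ?thesis using edge_frontier[OF ob] by (auto simp: horizontal_edge_def)
qed

lemma ext_top:
  assumes ob: "obstacle vs" and rl: "rectilinear vs" and z: "z \<in> region vs" "snd z = Y1 vs"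
  shows "\<exists>i. extreme_edge vs i \<and> horizontal_edge vs i \<and> z \<in> edge vs i \<and> (\<forall>w\<in>edge vs i. snd w = Y1 vs)"
proof -
  have l: "linear (\<lambda>w::pt. - snd w)" using lin_snd by (rule linear_compose_neg)
  have "\<exists>i<length vs. - snd (vtx vs i) = - snd (vtx vs (Suc i)) \<and> z \<in> edge vs i \<and> (\<forall>w\<in>edge vs i. - snd w = - Y1 vs)"
    by (rule extreme_point_edge[OF ob l, of "(0, 1)"])
       (use proj_bounds[OF obstacle_ne[OF ob]] z vertex_HV(1)[OF ob rl] in \<open>auto simp: horizontal_edge_def\<close>)
  then show ?thesis using edge_frontier[OF ob] by (auto simp: horizontal_edge_def)
qed

lemma ext_left:
  assumes ob: "obstacle vs" and rl: "rectilinear vs" and z: "z \<in> region vs" "fst z = X0 vs"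
  shows "\<exists>i. extreme_edge vs i \<and> vertical_edge vs i \<and> z \<in> edge vs i \<and> (\<forall>w\<in>edge vs i. fst w = X0 vs)"
proof -
  have "\<exists>i<length vs. fst (vtx vs i) = fst (vtx vs (Suc i)) \<and> z \<in> edge vs i \<and> (\<forall>w\<in>edge vs i. fst w = X0 vs)"
    by (rule extreme_point_edge[OF ob lin_fst, of "(-1, 0)"])
       (use proj_bounds[OF obstacle_ne[OF ob]] z vertex_HV(2)[OF ob rl] in \<open>auto simp: vertical_edge_def\<close>)
  then show ?thesis using edge_frontier[OF ob] by (auto simp: vertical_edge_def)
qed

lemma ext_right:
  assumes ob: "obstacle vs" and rl: "rectilinear vs" and z: "z \<in> region vs" "fst z = X1 vs"
  shows "\<exists>i. extreme_edge vs i \<and> vertical_edge vs i \<and> z \<in> edge vs i \<and> (\<forall>w\<in>edge vs i. fst w = X1 vs)"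
proof -
  have l: "linear (\<lambda>w::pt. - fst w)" using lin_fst by (rule linear_compose_neg)
  have "\<exists>i<length vs. - fst (vtx vs i) = - fst (vtx vs (Suc i)) \<and> z \<in> edge vs i \<and> (\<forall>w\<in>edge vs i. - fst w = - X1 vs)"
    by (rule extreme_point_edge[OF ob l, of "(1, 0)"])
       (use proj_bounds[OF obstacle_ne[OF ob]] z vertex_HV(2)[OF ob rl] in \<open>auto simp: vertical_edge_def\<close>)
  then show ?thesis using edge_frontier[OF ob] by (auto simp: vertical_edge_def)
qed

lemma corner_from_edges:
  assumes ob: "obstacle vs" and ei: "extreme_edge vs i" "horizontal_edge vs i"
    and ej: "extreme_edge vs j" "vertical_edge vs j" and z: "z \<in> edge vs i" "z \<in> edge vs j"
  shows "extreme_corner vs z"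
proof -
  let ?n = "length vs"
  have sp: "simple_polygon vs" using ob by (simp add: obstacle_def)
  have n3: "?n \<ge> 3" and ne: "vs \<noteq> []" using sp by (auto simp: simple_polygon_def)
  have ij: "i < ?n" "j < ?n" using ei ej by (auto simp: extreme_edge_def)
  have "i \<noteq> j"
  proof
    assume "i = j"
    then have "vtx vs i = vtx vs (Suc i)" using ei(2) ej(2) by (simp add: horizontal_edge_def vertical_edge_def prod_eq_iff)
    then show False using three_distinct(2)[OF ob, of i] by simp
  qed
  have sp1: "\<forall>k<?n. edge vs k \<inter> edge vs (Suc k) = {vtx vs (Suc k)}" using sp by (simp add: simple_polygon_def)
  have sp2: "\<forall>k<?n. \<forall>l<?n. k \<noteq> l \<and> l \<noteq> Suc k mod ?n \<and> k \<noteq> Suc l mod ?n \<longrightarrow> edge vs k \<inter> edge vs l = {}"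
    using sp by (simp add: simple_polygon_def)
  have zv: "z \<in> {vtx vs i, vtx vs (Suc i)} \<and> z \<in> {vtx vs j, vtx vs (Suc j)}"
  proof (cases "j = Suc i mod ?n")
    case True
    have "edge vs j = edge vs (Suc i)" using True edge_mod by metis
    then have "z = vtx vs (Suc i)" using sp1 ij z by blast
    moreover have "vtx vs j = vtx vs (Suc i)" using True vtx_mod by metis
    ultimately show ?thesis by simp
  next
    case False
    show ?thesis
    proof (cases "i = Suc j mod ?n")
      case True
      have "edge vs i = edge vs (Suc j)" using True edge_mod by metis
      then have "z = vtx vs (Suc j)" using sp1 ij z by blast
      moreover have "vtx vs i = vtx vs (Suc j)" using True vtx_mod by metis
      ultimately show ?thesis by simp
    next
      case False2: False
      then have "edge vs i \<inter> edge vs j = {}" using sp2 ij \<open>i \<noteq> j\<close> False by blast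
      then show ?thesis using z by blast
    qed
  qed
  then have "z \<in> set vs" using vtx_in_set[OF ne] by auto
  then show ?thesis unfolding extreme_corner_def using zv \<open>i \<noteq> j\<close> ei(1) ej(1) by blast
qed

lemma no_corner:
  assumes go: "general_obstacle vs" and z: "z \<in> region vs"
    and sx: "fst z = X0 vs \<or> fst z = X1 vs" and sy: "snd z = Y0 vs \<or> snd z = Y1 vs"
  shows False
proof -
  have ob: "obstacle vs" and rl: "rectilinear vs" and nc: "\<nexists>v. extreme_corner vs v"
    using go by (auto simp: general_obstacle_def rect_convex_def)
  obtain i where i: "extreme_edge vs i" "horizontal_edge vs i" "z \<in> edge vs i"
    using sy ext_bot[OF ob rl z] ext_top[OF ob rl z] by blast
  obtain j where j: "extreme_edge vs j" "vertical_edge vs j" "z \<in> edge vs j"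
    using sx ext_left[OF ob rl z] ext_right[OF ob rl z] by blast
  show False using corner_from_edges[OF ob i(1,2) j(1,2) i(3) j(3)] nc by blast
qed


lemma lin_swap: "linear (prod.swap :: pt \<Rightarrow> pt)"
  by (simp add: linear_iff)

lemma seg_swap: "closed_segment (prod.swap a) (prod.swap b) = prod.swap ` closed_segment (a::pt) b"
  by (rule closed_segment_linear_image[OF lin_swap])

lemma swap_swap_img: "prod.swap ` prod.swap ` (A :: pt set) = A"
  by (simp add: image_image)

lemma no_small_skeleton:
  assumes go: "general_obstacle vs" and nc: "\<not> has_cross vs" and sk: "skeleton vs S"
    and seg: "\<Union>S = closed_segment u1 v1 \<union> closed_segment u2 v2"
  shows False
proof -
  have ob: "obstacle vs" and rc: "rect_convex vs" using go by (auto simp: general_obstacle_def)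
  have rl: "rectilinear vs" using rc by (simp add: rect_convex_def)
  have ne: "vs \<noteq> []" using obstacle_ne[OF ob] .
  let ?K = "region vs" and ?A = "closed_segment u1 v1 \<union> closed_segment u2 v2"
  have box: "\<forall>z\<in>?K. X0 vs \<le> fst z \<and> fst z \<le> X1 vs \<and> Y0 vs \<le> snd z \<and> snd z \<le> Y1 vs"
    using proj_bounds[OF ne] by blast
  have ncr: "\<forall>z\<in>?K. (fst z = X0 vs \<or> fst z = X1 vs) \<longrightarrow> snd z \<noteq> Y0 vs \<and> snd z \<noteq> Y1 vs"
    using no_corner[OF go] by blast
  have sub: "\<Union>S \<subseteq> ?K" using sk by (simp add: skeleton_def)
  have s1: "closed_segment u1 v1 \<subseteq> ?K" and s2: "closed_segment u2 v2 \<subseteq> ?K" using sub seg by auto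
  obtain zl where zl: "zl \<in> ?K" "fst zl = X0 vs" using proj_attained(1)[OF ne] by auto
  obtain zb where zb: "zb \<in> ?K" "snd zb = Y0 vs" using proj_attained(3)[OF ne] by auto
  have Y01: "Y0 vs < Y1 vs"
  proof -
    have "Y0 vs \<le> snd zl" "snd zl \<le> Y1 vs" "snd zl \<noteq> Y0 vs" using box ncr zl by auto
    then show ?thesis by simp
  qed
  have X01: "X0 vs < X1 vs"
  proof -
    have "X0 vs \<le> fst zb" "fst zb \<le> X1 vs" "fst zb \<noteq> X0 vs" using box ncr zb by auto
    then show ?thesis by simp
  qed
  have covx: "\<forall>x. X0 vs \<le> x \<and> x \<le> X1 vs \<longrightarrow> (\<exists>z\<in>?A. fst z = x)"
    using cover_x[OF ob sk] seg by auto
  have covy: "\<forall>y. Y0 vs \<le> y \<and> y \<le> Y1 vs \<longrightarrow> (\<exists>z\<in>?A. snd z = y)"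
    using cover_y[OF ob sk] seg by auto
  obtain P Q where PQ: "P \<in> ?K" "Q \<in> ?K" "snd P = Y1 vs" "snd Q = Y0 vs" "closed_segment P Q \<subseteq> ?K"
    using abstract_sH[OF box vconv_region[OF rc] ncr s1 s2 covx covy] Y01 X01 by auto
  let ?K' = "prod.swap ` region vs"
  have box': "\<forall>z\<in>?K'. Y0 vs \<le> fst z \<and> fst z \<le> Y1 vs \<and> X0 vs \<le> snd z \<and> snd z \<le> X1 vs"
    using box by auto
  have vconv': "\<forall>p\<in>?K'. \<forall>q\<in>?K'. fst p = fst q \<longrightarrow> closed_segment p q \<subseteq> ?K'"
  proof (intro ballI impI)
    fix p q assume pq: "p \<in> ?K'" "q \<in> ?K'" "fst p = fst q"
    then obtain p0 q0 where pq0: "p0 \<in> ?K" "q0 \<in> ?K" "p = prod.swap p0" "q = prod.swap q0" by auto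
    then have "snd p0 = snd q0" using pq(3) by simp
    then have "closed_segment p0 q0 \<subseteq> ?K" using hconv_region[OF rc] pq0 by blast
    then show "closed_segment p q \<subseteq> ?K'" using pq0 seg_swap by (metis image_mono)
  qed
  have ncr': "\<forall>z\<in>?K'. (fst z = Y0 vs \<or> fst z = Y1 vs) \<longrightarrow> snd z \<noteq> X0 vs \<and> snd z \<noteq> X1 vs"
    using ncr by auto
  have s1': "closed_segment (prod.swap u1) (prod.swap v1) \<subseteq> ?K'" using s1 seg_swap by (metis image_mono)
  have s2': "closed_segment (prod.swap u2) (prod.swap v2) \<subseteq> ?K'" using s2 seg_swap by (metis image_mono)
  have covx': "\<forall>x. Y0 vs \<le> x \<and> x \<le> Y1 vs \<longrightarrow>
      (\<exists>z\<in>closed_segment (prod.swap u1) (prod.swap v1) \<union> closed_segment (prod.swap u2) (prod.swap v2). fst z = x)"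
  proof (intro allI impI)
    fix x assume "Y0 vs \<le> x \<and> x \<le> Y1 vs"
    then obtain z where "z \<in> ?A" "snd z = x" using covy by blast
    then show "\<exists>z\<in>closed_segment (prod.swap u1) (prod.swap v1) \<union> closed_segment (prod.swap u2) (prod.swap v2). fst z = x"
      unfolding seg_swap by (intro bexI[of _ "prod.swap z"]) auto
  qed
  have covy': "\<forall>y. X0 vs \<le> y \<and> y \<le> X1 vs \<longrightarrow>
      (\<exists>z\<in>closed_segment (prod.swap u1) (prod.swap v1) \<union> closed_segment (prod.swap u2) (prod.swap v2). snd z = y)"
  proof (intro allI impI)
    fix y assume "X0 vs \<le> y \<and> y \<le> X1 vs"
    then obtain z where "z \<in> ?A" "fst z = y" using covx by blast
    then show "\<exists>z\<in>closed_segment (prod.swap u1) (prod.swap v1) \<union> closed_segment (prod.swap u2) (prod.swap v2). snd z = y"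
      unfolding seg_swap by (intro bexI[of _ "prod.swap z"]) auto
  qed
  obtain P' Q' where PQ': "P' \<in> ?K'" "Q' \<in> ?K'" "snd P' = X1 vs" "snd Q' = X0 vs" "closed_segment P' Q' \<subseteq> ?K'"
    using abstract_sH[OF box' vconv' ncr' s1' s2' covx' covy'] Y01 X01 by auto
  define P2 where "P2 = prod.swap P'"
  define Q2 where "Q2 = prod.swap Q'"
  have PQ2: "P2 \<in> ?K" "Q2 \<in> ?K" "fst P2 = X1 vs" "fst Q2 = X0 vs" "closed_segment P2 Q2 \<subseteq> ?K"
  proof -
    show "P2 \<in> ?K" "Q2 \<in> ?K" using PQ' by (auto simp: P2_def Q2_def)
    show "fst P2 = X1 vs" "fst Q2 = X0 vs" using PQ' by (auto simp: P2_def Q2_def)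
    have "closed_segment P2 Q2 = prod.swap ` closed_segment P' Q'" unfolding P2_def Q2_def by (rule seg_swap)
    also have "\<dots> \<subseteq> prod.swap ` ?K'" using PQ'(5) by (rule image_mono)
    also have "\<dots> = ?K" by (rule swap_swap_img)
    finally show "closed_segment P2 Q2 \<subseteq> ?K" .
  qed
  obtain i where i: "extreme_edge vs i" "horizontal_edge vs i" "P \<in> edge vs i" "\<forall>w\<in>edge vs i. snd w = Y1 vs"
    using ext_top[OF ob rl PQ(1,3)] by blast
  obtain j where j: "extreme_edge vs j" "horizontal_edge vs j" "Q \<in> edge vs j" "\<forall>w\<in>edge vs j. snd w = Y0 vs"
    using ext_bot[OF ob rl PQ(2,4)] by blast
  have "i \<noteq> j" using i j Y01 by auto
  obtain i' where i': "extreme_edge vs i'" "vertical_edge vs i'" "P2 \<in> edge vs i'" "\<forall>w\<in>edge vs i'. fst w = X1 vs"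
    using ext_right[OF ob rl PQ2(1,3)] by blast
  obtain j' where j': "extreme_edge vs j'" "vertical_edge vs j'" "Q2 \<in> edge vs j'" "\<forall>w\<in>edge vs j'. fst w = X0 vs"
    using ext_left[OF ob rl PQ2(2,4)] by blast
  have "i' \<noteq> j'" using i' j' X01 by auto
  have "is_cross vs (closed_segment P Q) (closed_segment P2 Q2)"
    unfolding is_cross_def using PQ(5) PQ2(5) i j i' j' \<open>i \<noteq> j\<close> \<open>i' \<noteq> j'\<close> by blast
  then show False using nc by (auto simp: has_cross_def)
qed

theorem corollary2:
  fixes vs :: "pt list" and S :: "pt set set"
  assumes "general_obstacle vs"
    and "\<not> has_cross vs"
    and "min_skeleton vs S"
  shows "card S \<ge> 3"
proof (rule ccontr)
  assume "\<not> card S \<ge> 3"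
  then have c: "card S \<le> 2" by simp
  have sk: "skeleton vs S" using assms(3) by (simp add: min_skeleton_def)
  have fin: "finite S" and cs: "\<forall>s\<in>S. is_closed_segment s" using sk by (auto simp: skeleton_def)
  have ob: "obstacle vs" using assms(1) by (simp add: general_obstacle_def)
  have ne: "vs \<noteq> []" using obstacle_ne[OF ob] .
  consider "card S = 0" | "card S = 1" | "card S = 2" using c by linarith
  then show False
  proof cases
    case 1
    then have "S = {}" using fin by simp
    moreover have "X0 vs \<le> X1 vs" using proj_attained(1)[OF ne] proj_bounds[OF ne] by force
    ultimately show False using cover_x[OF ob sk, of "X0 vs"] by simp
  next
    case 2
    then obtain s where "S = {s}" using card_1_singletonE by blast
    moreover obtain u v where "s = closed_segment u v" using cs \<open>S = {s}\<close> by (auto simp: is_closed_segment_def)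
    ultimately have "\<Union>S = closed_segment u v \<union> closed_segment u v" by simp
    then show False using no_small_skeleton[OF assms(1,2) sk] by blast
  next
    case 3
    then obtain s1 s2 where "S = {s1, s2}" using card_2_iff[of S] by auto
    moreover obtain u1 v1 where "s1 = closed_segment u1 v1" using cs \<open>S = {s1, s2}\<close> by (auto simp: is_closed_segment_def)
    moreover obtain u2 v2 where "s2 = closed_segment u2 v2" using cs \<open>S = {s1, s2}\<close> by (auto simp: is_closed_segment_def)
    ultimately have "\<Union>S = closed_segment u1 v1 \<union> closed_segment u2 v2" by simp
    then show False using no_small_skeleton[OF assms(1,2) sk] by blast
  qed
qed


end
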